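(* Let $J$ be the ideal of a non-trivial, non-minimal tetrahedral curve $(a_1,\dots,a_6)$, and let $J=L\cdot I+(F)$ be the basic double link obtained by reducing $J$ at a facet of maximal weight (with $L$, $F$ and $I$ as prescribed by that reduction). Set $e=\deg F$. Then the mapping cone resolution of $J$ obtained from the exact sequence $$0\to R(-e-1)\to I(-1)\oplus R(-e)\to J\to 0$$ (first map $C\mapsto (FC,LC)$, second map $(A,B)\mapsto LA-FB$), using the minimal free resolution of $I$, is a minimal free resolution if and only if $J$ is not, up to a permutation of the variables, the ideal of a curve $(0,r,r,r,r,0)$.
   Context: Let $k$ be a field, $R=k[a,b,c,d]$. The tetrahedral curve $(a_1,\dots,a_6)$ has ideal $(a,b)^{a_1}\cap(a,c)^{a_2}\cap(a,d)^{a_3}\cap(b,c)^{a_4}\cap(b,d)^{a_5}\cap(c,d)^{a_6}$; permuting variables permutes entries. Facets $\{a_1,a_2,a_3\},\{a_1,a_4,a_5\},\{a_2,a_4,a_6\},\{a_3,a_5,a_6\}$ with weight the sum of entries. With $a_i'=\max\{0,a_i-1\}$, the reductions: (A) if $a_1+a_2\ge a_4$, $a_1+a_3\ge a_5$, $a_2+a_3\ge a_6$: $L=a$, $F=b^{a_1}c^{a_2}d^{a_3}$, $I$ the ideal of $(a_1',a_2',a_3',a_4,a_5,a_6)$; (B) if $a_1+a_4\ge a_2$, $a_1+a_5\ge a_3$, $a_4+a_5\ge a_6$: $L=b$, $F=a^{a_1}c^{a_4}d^{a_5}$, $I$ of $(a_1',a_2,a_3,a_4',a_5',a_6)$; (C)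 if $a_2+a_4\ge a_1$, $a_2+a_6\ge a_3$, $a_4+a_6\ge a_5$: $L=c$, $F=a^{a_2}b^{a_4}d^{a_6}$, $I$ of $(a_1,a_2',a_3,a_4',a_5,a_6')$; (D) if $a_3+a_5\ge a_1$, $a_3+a_6\ge a_2$, $a_5+a_6\ge a_4$: $L=d$, $F=a^{a_3}b^{a_5}c^{a_6}$, $I$ of $(a_1,a_2,a_3',a_4,a_5',a_6')$; in each case $J=L\cdot I+(F)$. These are reductions at the facets $\{a_1,a_2,a_3\},\{a_1,a_4,a_5\},\{a_2,a_4,a_6\},\{a_3,a_5,a_6\}$ respectively. A non-arithmetically Cohen–Macaulay curve is minimal if no reduction applies; if a non-trivial curve is not minimal, a reduction at a facet of maximal weight exists. *)

theory Defs
  imports "HOL-Library.Poly_Mapping" "HOL-Combinatorics.Permutations"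
begin

text \<open>Polynomials in the variables x_0 = a, x_1 = b, x_2 = c, x_3 = d over a field k,
  represented as finitely supported maps from monomials (exponent vectors) to coefficients.\<close>

type_synonym 'k mpoly4 = "(nat \<Rightarrow>\<^sub>0 nat) \<Rightarrow>\<^sub>0 'k"

definition var :: "nat \<Rightarrow> 'k::field mpoly4" where
  "var i = Poly_Mapping.single (Poly_Mapping.single i 1) 1"

definition mdeg :: "(nat \<Rightarrow>\<^sub>0 nat) \<Rightarrow> nat" where
  "mdeg m = (\<Sum>i\<in>Poly_Mapping.keys m. Poly_Mapping.lookup m i)"

text \<open>p is homogeneous of degree d (the zero polynomial is homogeneous of every degree)\<close>
definition homog :: "'k::field mpoly4 \<Rightarrow> int \<Rightarrow> bool" where
  "homog p d = (p = 0 \<or> (\<forall>m\<in>Poly_Mapping.keys p. int (mdeg m) = d))"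

definition tdeg :: "'k::field mpoly4 \<Rightarrow> nat" where
  "tdeg p = (if p = 0 then 0 else Max (mdeg ` Poly_Mapping.keys p))"

text \<open>membership in the homogeneous maximal ideal (a,b,c,d): zero constant term\<close>
definition in_max :: "'k::field mpoly4 \<Rightarrow> bool" where
  "in_max p = (Poly_Mapping.lookup p 0 = 0)"

definition ideal_gen :: "'k::field mpoly4 set \<Rightarrow> 'k mpoly4 set" where
  "ideal_gen S = {\<Sum>i<n. c i * s i | (n::nat) c s. \<forall>i<n. s i \<in> S}"

definition pow_ideal :: "nat \<Rightarrow> nat \<Rightarrow> nat \<Rightarrow> 'k::field mpoly4 set" where
  "pow_ideal i j n = ideal_gen {var i ^ l * var j ^ (n - l) | l. l \<le> n}"

text \<open>Position (0-based) of the entry of the 6-tuple belonging to the pair of variables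
  {x_i, x_j}: (a,b)->a_1, (a,c)->a_2, (a,d)->a_3, (b,c)->a_4, (b,d)->a_5, (c,d)->a_6.\<close>
definition pidx :: "nat \<Rightarrow> nat \<Rightarrow> nat" where
  "pidx i j = (let p = min i j; q = max i j in
     if p = 0 then q - 1 else if p = 1 then q + 1 else 5)"

text \<open>The tetrahedral curve ideal of (a_1,...,a_6) (list of length 6, entry a_k at index k-1),
  after applying the permutation sigma to the variables (x_i is replaced by x_(sigma i)).
  With sigma = id this is (a,b)^a1 \<inter> (a,c)^a2 \<inter> (a,d)^a3 \<inter> (b,c)^a4 \<inter> (b,d)^a5 \<inter> (c,d)^a6.\<close>
definition perm_tet_ideal :: "(nat \<Rightarrow> nat) \<Rightarrow> nat list \<Rightarrow> 'k::field mpoly4 set" where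
  "perm_tet_ideal \<sigma> a =
     (\<Inter>(i, j) \<in> {(i, j). i < j \<and> j < 4}. pow_ideal (\<sigma> i) (\<sigma> j) (a ! pidx i j))"

definition tet_ideal :: "nat list \<Rightarrow> 'k::field mpoly4 set" where
  "tet_ideal a = perm_tet_ideal id a"

definition trivial_curve :: "nat list \<Rightarrow> bool" where
  "trivial_curve a = (\<forall>k<6. a ! k = 0)"

text \<open>Facets 0,1,2,3 = reductions (A),(B),(C),(D), i.e. facets {a1,a2,a3}, {a1,a4,a5},
  {a2,a4,a6}, {a3,a5,a6}.\<close>
definition facet_weight :: "nat \<Rightarrow> nat list \<Rightarrow> nat" where
  "facet_weight X a =
    (if X = 0 then a!0 + a!1 + a!2
     else if X = 1 then a!0 + a!3 + a!4
     else if X = 2 then a!1 + a!3 + a!5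
     else a!2 + a!4 + a!5)"

definition reduction_applies :: "nat \<Rightarrow> nat list \<Rightarrow> bool" where
  "reduction_applies X a =
    (if X = 0 then a!0 + a!1 \<ge> a!3 \<and> a!0 + a!2 \<ge> a!4 \<and> a!1 + a!2 \<ge> a!5
     else if X = 1 then a!0 + a!3 \<ge> a!1 \<and> a!0 + a!4 \<ge> a!2 \<and> a!3 + a!4 \<ge> a!5
     else if X = 2 then a!1 + a!3 \<ge> a!0 \<and> a!1 + a!5 \<ge> a!2 \<and> a!3 + a!5 \<ge> a!4
     else if X = 3 then a!2 + a!4 \<ge> a!0 \<and> a!2 + a!5 \<ge> a!1 \<and> a!4 + a!5 \<ge> a!3
     else False)"

definition red_L :: "nat \<Rightarrow> 'k::field mpoly4" where
  "red_L X = var X"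

definition red_F :: "nat \<Rightarrow> nat list \<Rightarrow> 'k::field mpoly4" where
  "red_F X a =
    (if X = 0 then var 1 ^ a!0 * var 2 ^ a!1 * var 3 ^ a!2
     else if X = 1 then var 0 ^ a!0 * var 2 ^ a!3 * var 3 ^ a!4
     else if X = 2 then var 0 ^ a!1 * var 1 ^ a!3 * var 3 ^ a!5
     else var 0 ^ a!2 * var 1 ^ a!4 * var 2 ^ a!5)"

text \<open>the tuple of the curve whose ideal is I (nat subtraction is max 0 (x - 1))\<close>
definition red_tuple :: "nat \<Rightarrow> nat list \<Rightarrow> nat list" where
  "red_tuple X a =
    (if X = 0 then [a!0 - 1, a!1 - 1, a!2 - 1, a!3, a!4, a!5]
     else if X = 1 then [a!0 - 1, a!1, a!2, a!3 - 1, a!4 - 1, a!5]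
     else if X = 2 then [a!0, a!1 - 1, a!2, a!3 - 1, a!4, a!5 - 1]
     else [a!0, a!1, a!2 - 1, a!3, a!4 - 1, a!5 - 1])"

definition non_minimal :: "nat list \<Rightarrow> bool" where
  "non_minimal a = (\<exists>X<4. reduction_applies X a)"

text \<open>A graded free resolution of a homogeneous ideal I:
  0 -> F_N -> ... -> F_1 -> F_0 -> I -> 0, where F_i = (+)_{j < r i} R(- dg i j),
  r i = 0 for i > N, g j in I is the image of the j-th basis element of F_0, and
  M i k j is the (k,j) entry of the matrix of F_i -> F_(i-1) (i \<ge> 1), i.e. the
  coefficient of the k-th basis vector of F_(i-1) in the image of the j-th basis vector of F_i.\<close>
definition graded_free_res ::
  "'k::field mpoly4 set \<Rightarrow> nat \<Rightarrow> (nat \<Rightarrow> nat) \<Rightarrow> (nat \<Rightarrow> nat \<Rightarrow> int) \<Rightarrow>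
   (nat \<Rightarrow> 'k mpoly4) \<Rightarrow> (nat \<Rightarrow> nat \<Rightarrow> nat \<Rightarrow> 'k mpoly4) \<Rightarrow> bool" where
  "graded_free_res I N r dg g M \<longleftrightarrow>
     (\<forall>i>N. r i = 0) \<and>
     (\<forall>j<r 0. homog (g j) (dg 0 j)) \<and>
     (\<forall>i\<ge>1. \<forall>k<r (i - 1). \<forall>j<r i. homog (M i k j) (dg i j - dg (i - 1) k)) \<and>
     {\<Sum>j<r 0. g j * v j | v. True} = I \<and>
     (\<forall>v. (\<Sum>j<r 0. g j * v j) = 0 \<longleftrightarrow>
          (\<exists>w. \<forall>k<r 0. v k = (\<Sum>j<r 1. M 1 k j * w j))) \<and>
     (\<forall>i\<ge>1. \<forall>v. (\<forall>k<r (i - 1). (\<Sum>j<r i. M i k j * v j) = 0) \<longleftrightarrow>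
          (\<exists>w. \<forall>k<r i. v k = (\<Sum>j<r (Suc i). M (Suc i) k j * w j)))"

definition min_graded_free_res ::
  "'k::field mpoly4 set \<Rightarrow> nat \<Rightarrow> (nat \<Rightarrow> nat) \<Rightarrow> (nat \<Rightarrow> nat \<Rightarrow> int) \<Rightarrow>
   (nat \<Rightarrow> 'k mpoly4) \<Rightarrow> (nat \<Rightarrow> nat \<Rightarrow> nat \<Rightarrow> 'k mpoly4) \<Rightarrow> bool" where
  "min_graded_free_res I N r dg g M \<longleftrightarrow>
     graded_free_res I N r dg g M \<and>
     (\<forall>i\<ge>1. \<forall>k<r (i - 1). \<forall>j<r i. in_max (M i k j))"

text \<open>Given the resolution (N, r, dg, g, M) of I, the exact sequence
  0 -> R(-e-1) -> I(-1) (+) R(-e) -> J -> 0, C |-> (F C, L C), (A, B) |-> L A - F B,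
  and a lift h of the first map to F_0(-1) (+) R(-e) of the form (h, L) (so sum_j g_j h_j = F),
  the mapping cone is the complex
    C_0 = F_0(-1) (+) R(-e),  C_1 = F_1(-1) (+) R(-e-1),  C_i = F_i(-1) (i \<ge> 2),
  with augmentation (A,B) |-> L A - F B and differentials
    d_1 = [[M_1, h], [0, L]],  d_2 = [[M_2], [0]],  d_i = M_i (i \<ge> 3).
  (In C_0 and C_1 the extra summand is the last basis vector, of index r 0 resp. r 1.)\<close>
definition cone_len :: "nat \<Rightarrow> nat" where
  "cone_len N = max N 1"

definition cone_rank :: "(nat \<Rightarrow> nat) \<Rightarrow> nat \<Rightarrow> nat" where
  "cone_rank r i = (if i \<le> 1 then r i + 1 else r i)"

definition cone_deg :: "(nat \<Rightarrow> nat) \<Rightarrow> (nat \<Rightarrow> nat \<Rightarrow> int) \<Rightarrow> nat \<Rightarrow> nat \<Rightarrow> nat \<Rightarrow> int" where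
  "cone_deg r dg e i j =
     (if i = 0 \<and> j = r 0 then int e
      else if i = 1 \<and> j = r 1 then int e + 1
      else dg i j + 1)"

definition cone_aug :: "'k::field mpoly4 \<Rightarrow> 'k mpoly4 \<Rightarrow> (nat \<Rightarrow> nat) \<Rightarrow> (nat \<Rightarrow> 'k mpoly4)
    \<Rightarrow> nat \<Rightarrow> 'k mpoly4" where
  "cone_aug L F r g j = (if j = r 0 then - F else L * g j)"

definition cone_mat :: "'k::field mpoly4 \<Rightarrow> (nat \<Rightarrow> nat) \<Rightarrow> (nat \<Rightarrow> 'k mpoly4) \<Rightarrow>
    (nat \<Rightarrow> nat \<Rightarrow> nat \<Rightarrow> 'k mpoly4) \<Rightarrow> nat \<Rightarrow> nat \<Rightarrow> nat \<Rightarrow> 'k mpoly4" where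
  "cone_mat L r h M i k j =
     (if i = 1 then
        (if j = r 1 then (if k = r 0 then L else h k)
         else (if k = r 0 then 0 else M 1 k j))
      else if i = 2 then (if k = r 1 then 0 else M 2 k j)
      else M i k j)"

definition special_form :: "'k::field mpoly4 set \<Rightarrow> bool" where
  "special_form J = (\<exists>\<sigma> r. \<sigma> permutes {0..<4} \<and>
      J = perm_tet_ideal \<sigma> [0, r, r, r, r, 0])"

end

theory Submission
  imports Defs "HOL-Combinatorics.Transposition"
begin

lemma ig_zero: "0 \<in> ideal_gen S"
  unfolding ideal_gen_def by (rule CollectI, rule exI[of _ 0]) auto

lemma ig_base: "s \<in> S \<Longrightarrow> s \<in> ideal_gen S"
  unfolding ideal_gen_def
  by (rule CollectI, rule exI[of _ 1], rule exI[of _ "\<lambda>_. 1"], rule exI[of _ "\<lambda>_. s"]) auto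

lemma ig_mult: "x \<in> ideal_gen S \<Longrightarrow> c * x \<in> ideal_gen S"
proof -
  assume "x \<in> ideal_gen S"
  then obtain n :: nat and d s where x: "x = (\<Sum>i<n. d i * s i)" "\<forall>i<n. s i \<in> S"
    unfolding ideal_gen_def by blast
  have "c * x = (\<Sum>i<n. (c * d i) * s i)" unfolding x sum_distrib_left by (simp add: mult.assoc)
  then show ?thesis using x(2) unfolding ideal_gen_def
    by (intro CollectI exI[of _ n] exI[of _ "\<lambda>i. c * d i"] exI[of _ s]) simp
qed

lemma ig_add: "x \<in> ideal_gen S \<Longrightarrow> y \<in> ideal_gen S \<Longrightarrow> x + y \<in> ideal_gen S"
proof -
  assume "x \<in> ideal_gen S" "y \<in> ideal_gen S"
  then obtain n m :: nat and d s d' s' where x: "x = (\<Sum>i<n. d i * s i)" "\<forall>i<n. s i \<in> S"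
    and y: "y = (\<Sum>i<m. d' i * s' i)" "\<forall>i<m. s' i \<in> S"
    unfolding ideal_gen_def by blast
  define D where "D = (\<lambda>i. if i < n then d i else d' (i - n))"
  define T where "T = (\<lambda>i. if i < n then s i else s' (i - n))"
  have "(\<Sum>i<n+m. D i * T i) = (\<Sum>i<n. D i * T i) + (\<Sum>i<m. D (n+i) * T (n+i))"
    by (induction m) (simp_all add: add_ac)
  also have "\<dots> = x + y" unfolding x y D_def T_def by simp
  finally have "x + y = (\<Sum>i<n+m. D i * T i)" by simp
  moreover have "\<forall>i<n+m. T i \<in> S" using x(2) y(2) unfolding T_def by auto
  ultimately show ?thesis unfolding ideal_gen_def
    by (intro CollectI exI[of _ "n+m"] exI[of _ D] exI[of _ T]) simp
qed

lemma ig_sum: "(\<And>a. a \<in> A \<Longrightarrow> f a \<in> ideal_gen S) \<Longrightarrow> sum f A \<in> ideal_gen S"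
  by (induction A rule: infinite_finite_induct) (auto intro: ig_zero ig_add)

abbreviation "lk \<equiv> Poly_Mapping.lookup"
abbreviation "ks \<equiv> Poly_Mapping.keys"
abbreviation "sg \<equiv> Poly_Mapping.single"

definition le_m :: "(nat \<Rightarrow>\<^sub>0 nat) \<Rightarrow> (nat \<Rightarrow>\<^sub>0 nat) \<Rightarrow> bool" where
  "le_m g m = (\<forall>k. lk g k \<le> lk m k)"

lemma poly_expand: "p = (\<Sum>m\<in>ks p. sg m (lk p m))"
proof (rule poly_mapping_eqI)
  fix k
  show "lk p k = lk (\<Sum>m\<in>ks p. sg m (lk p m)) k"
    by (simp add: lookup_sum lookup_single when_def sum.delta in_keys_iff)
qed

lemma diff_add_m: "le_m g m \<Longrightarrow> m - g + g = m"
  by (rule poly_mapping_eqI) (simp add: le_m_def lookup_add lookup_minus)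

lemma single_decomp: "le_m g m \<Longrightarrow> sg m c = sg (m - g) (c::'k::field) * sg g 1"
  by (simp add: mult_single diff_add_m)

lemma keys_mult_single: "ks (c * sg g (1::'k::field)) \<subseteq> {a + g | a. a \<in> ks c}"
  using keys_mult[of c "sg g 1"] by auto

lemma keys_single_mult: "ks (sg g (1::'k::field) * c) \<subseteq> {g + a | a. a \<in> ks c}"
  using keys_mult[of "sg g 1" c] by auto

lemma mono_ideal:
  fixes G :: "(nat \<Rightarrow>\<^sub>0 nat) set" and U
  assumes up: "\<And>m m'. m \<in> U \<Longrightarrow> le_m m m' \<Longrightarrow> m' \<in> U"
    and gU: "G \<subseteq> U" and cov: "\<And>m. m \<in> U \<Longrightarrow> \<exists>g\<in>G. le_m g m"
  shows "ideal_gen ((\<lambda>g. sg g (1::'k::field)) ` G) = {p. ks p \<subseteq> U}"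
proof
  show "ideal_gen ((\<lambda>g. sg g (1::'k)) ` G) \<subseteq> {p. ks p \<subseteq> U}"
  proof
    fix x :: "'k mpoly4" assume "x \<in> ideal_gen ((\<lambda>g. sg g (1::'k)) ` G)"
    then obtain n :: nat and d s where x: "x = (\<Sum>i<n. d i * s i)"
      "\<forall>i<n. s i \<in> (\<lambda>g. sg g (1::'k)) ` G"
      unfolding ideal_gen_def by blast
    have "ks (d i * s i) \<subseteq> U" if "i < n" for i
    proof -
      obtain g where g: "g \<in> G" "s i = sg g 1" using x(2) \<open>i < n\<close> by auto
      have "a + g \<in> U" for a
        by (rule up[of g]) (use g gU in \<open>auto simp: le_m_def lookup_add\<close>)
      then show ?thesis using keys_mult_single[of "d i" g] g by auto
    qed
    then have "(\<Union>i<n. ks (d i * s i)) \<subseteq> U" by blast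
    moreover have "ks x \<subseteq> (\<Union>i<n. ks (d i * s i))" unfolding x(1) by (rule keys_sum)
    ultimately show "x \<in> {p. ks p \<subseteq> U}" by auto
  qed
next
  show "{p. ks p \<subseteq> U} \<subseteq> ideal_gen ((\<lambda>g. sg g (1::'k)) ` G)"
  proof
    fix p :: "'k mpoly4" assume "p \<in> {p. ks p \<subseteq> U}"
    then have kU: "ks p \<subseteq> U" by simp
    have "sg m (lk p m) \<in> ideal_gen ((\<lambda>g. sg g (1::'k)) ` G)" if mk: "m \<in> ks p" for m
    proof -
      obtain g where g: "g \<in> G" "le_m g m" using cov kU mk by blast
      show ?thesis unfolding single_decomp[OF g(2)]
        by (rule ig_mult, rule ig_base) (use g in auto)
    qed
    then show "p \<in> ideal_gen ((\<lambda>g. sg g (1::'k)) ` G)"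
      by (subst poly_expand) (rule ig_sum)
  qed
qed

lemma var_pow: "(var i :: 'k::field mpoly4) ^ l = sg (sg i l) 1"
  by (induction l) (simp_all add: var_def mult_single single_add[symmetric] add.commute)

lemma pow_ideal_char:
  assumes "i \<noteq> j"
  shows "(pow_ideal i j n :: 'k::field mpoly4 set) = {p. ks p \<subseteq> {m. n \<le> lk m i + lk m j}}"
proof -
  have eq: "{var i ^ l * var j ^ (n - l) | l. l \<le> n} =
        (\<lambda>g. sg g (1::'k)) ` {sg i l + sg j (n - l) | l. l \<le> n}"
    by (auto simp: var_pow mult_single)
  show ?thesis unfolding pow_ideal_def eq
  proof (rule mono_ideal)
    fix m m' assume "m \<in> {m. n \<le> lk m i + lk m j}" "le_m m m'"
    then have "n \<le> lk m i + lk m j" "lk m i \<le> lk m' i" "lk m j \<le> lk m' j"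
      unfolding le_m_def by auto
    then show "m' \<in> {m. n \<le> lk m i + lk m j}" by simp
  next
    show "{sg i l + sg j (n - l) |l. l \<le> n} \<subseteq> {m. n \<le> lk m i + lk m j}"
      using assms by (auto simp: lookup_add lookup_single when_def)
  next
    fix m assume m: "m \<in> {m. n \<le> lk m i + lk m j}"
    define l where "l = min (lk m i) n"
    have "le_m (sg i l + sg j (n - l)) m"
      using m assms unfolding le_m_def l_def by (auto simp: lookup_add lookup_single when_def)
    moreover have "l \<le> n" unfolding l_def by simp
    ultimately show "\<exists>g\<in>{sg i l + sg j (n - l) |l. l \<le> n}. le_m g m" by blast
  qed
qed

definition pc6 :: "(nat \<Rightarrow> nat) \<Rightarrow> nat list \<Rightarrow> (nat \<Rightarrow>\<^sub>0 nat) \<Rightarrow> bool" where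
  "pc6 \<sigma> b m = (b!0 \<le> lk m (\<sigma> 0) + lk m (\<sigma> 1) \<and> b!1 \<le> lk m (\<sigma> 0) + lk m (\<sigma> 2) \<and>
     b!2 \<le> lk m (\<sigma> 0) + lk m (\<sigma> 3) \<and> b!3 \<le> lk m (\<sigma> 1) + lk m (\<sigma> 2) \<and>
     b!4 \<le> lk m (\<sigma> 1) + lk m (\<sigma> 3) \<and> b!5 \<le> lk m (\<sigma> 2) + lk m (\<sigma> 3))"

lemma pairs_eq: "{(i, j). i < j \<and> j < (4::nat)} = {(0,1),(0,2),(0,3),(1,2),(1,3),(2,3)}"
  by auto

lemma perm_tet_char:
  assumes inj: "inj_on \<sigma> {0..<4}"
  shows "(perm_tet_ideal \<sigma> b :: 'k::field mpoly4 set) = {p. ks p \<subseteq> {m. pc6 \<sigma> b m}}"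
proof -
  have ne: "\<sigma> i \<noteq> \<sigma> j" if "i < j" "j < 4" for i j
    using inj that unfolding inj_on_def by (metis atLeastLessThan_iff less_imp_neq order.strict_trans zero_le)
  have "(perm_tet_ideal \<sigma> b :: 'k mpoly4 set) =
     (\<Inter>(i, j) \<in> {(i, j). i < j \<and> j < 4}. {p. ks p \<subseteq> {m. b ! pidx i j \<le> lk m (\<sigma> i) + lk m (\<sigma> j)}})"
    unfolding perm_tet_ideal_def
    by (rule INF_cong) (auto simp: pow_ideal_char ne)
  also have "\<dots> = {p. ks p \<subseteq> {m. pc6 \<sigma> b m}}"
    unfolding pairs_eq pc6_def by (auto simp: pidx_def numeral_eq_Suc)
  finally show ?thesis .
qed

lemma tet_char: "(tet_ideal a :: 'k::field mpoly4 set) = {p. ks p \<subseteq> {m. pc6 id a m}}"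
  unfolding tet_ideal_def by (rule perm_tet_char) simp

lemma mon_in_tet: "(sg m (1::'k::field) \<in> tet_ideal a) = pc6 id a m"
  by (simp add: tet_char)

definition tm :: "nat \<Rightarrow> nat \<Rightarrow> nat \<Rightarrow> nat \<Rightarrow> (nat \<Rightarrow>\<^sub>0 nat)" where
  "tm x0 x1 x2 x3 = sg 0 x0 + sg 1 x1 + sg 2 x2 + sg 3 x3"

lemma lk_tm: "lk (tm x0 x1 x2 x3) k = (if k = 0 then x0 else if k = 1 then x1 else if k = 2 then x2
   else if k = 3 then x3 else 0)"
  by (simp add: tm_def lookup_add lookup_single when_def)

definition mF :: "nat \<Rightarrow> nat list \<Rightarrow> (nat \<Rightarrow>\<^sub>0 nat)" where
  "mF X a = (if X = 0 then tm 0 (a!0) (a!1) (a!2) else if X = 1 then tm (a!0) 0 (a!3) (a!4)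
     else if X = 2 then tm (a!1) (a!3) 0 (a!5) else tm (a!2) (a!4) (a!5) 0)"

lemma red_F_eq: "(red_F X a :: 'k::field mpoly4) = sg (mF X a) 1"
  by (simp add: red_F_def mF_def tm_def var_pow mult_single add_ac)

lemma red_L_eq: "(red_L X :: 'k::field mpoly4) = sg (sg X 1) 1"
  by (simp add: red_L_def var_def)

definition pattern :: "nat list \<Rightarrow> bool" where
  "pattern a = (\<exists>r>0. a = [0,r,r,r,r,0] \<or> a = [r,0,r,r,0,r] \<or> a = [r,r,0,0,r,r])"

lemma lk_eX: "lk (sg X 1) k = (if k = X then 1 else 0)"
  by (simp add: lookup_single when_def)

lemma X4: "(X::nat) < 4 \<Longrightarrow> X = 0 \<or> X = 1 \<or> X = 2 \<or> X = 3" by auto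

lemma pc6_up: "pc6 \<sigma> b m \<Longrightarrow> le_m m m' \<Longrightarrow> pc6 \<sigma> b m'"
  unfolding pc6_def le_m_def
  by (smt (verit, best) add_le_mono le_trans)

lemma c1:
  assumes "a = [a0,a1,a2,a3,a4,a5]" "X < 4" "reduction_applies X a"
  shows "pc6 id a (mF X a)"
  using X4[OF assms(2)] assms(3) unfolding assms(1)
  by (auto simp: pc6_def mF_def lk_tm reduction_applies_def)

lemma c2:
  assumes "a = [a0,a1,a2,a3,a4,a5]" "X < 4" "pc6 id (red_tuple X a) m"
  shows "pc6 id a (sg X 1 + m)"
  using X4[OF assms(2)] assms(3) unfolding assms(1)
  by (auto simp: pc6_def red_tuple_def lookup_add lk_eX)

lemma c3:
  assumes "a = [a0,a1,a2,a3,a4,a5]" "X < 4" "pc6 id a m" "1 \<le> lk m X"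
  shows "pc6 id (red_tuple X a) (m - sg X 1)"
  using X4[OF assms(2)] assms(3,4) unfolding assms(1)
  by (auto simp: pc6_def red_tuple_def lookup_minus lookup_single when_def)

lemma c4:
  assumes "a = [a0,a1,a2,a3,a4,a5]" "X < 4" "pc6 id a m" "lk m X = 0"
  shows "le_m (mF X a) m"
  using X4[OF assms(2)] assms(3,4) unfolding assms(1) le_m_def
  by (auto simp: pc6_def mF_def lk_tm)

lemma c5: "X < 4 \<Longrightarrow> lk (mF X a) X = 0"
  using X4[of X] by (auto simp: mF_def lk_tm)

lemma arith_core:
  fixes x0 x1 x2 y3 y4 y5 :: nat
  assumes R: "y3 \<le> x0+x1" "y4 \<le> x0+x2" "y5 \<le> x1+x2"
    and W: "y3+y4 \<le> x1+x2" "y3+y5 \<le> x0+x2" "y4+y5 \<le> x0+x1"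
    and nt: "x0 \<noteq> 0 \<or> x1 \<noteq> 0 \<or> x2 \<noteq> 0 \<or> y3 \<noteq> 0 \<or> y4 \<noteq> 0 \<or> y5 \<noteq> 0"
  shows "((0 < x0 \<and> y3 < x0+x1 \<and> y4 < x0+x2) \<or> (0 < x1 \<and> y3 < x0+x1 \<and> y5 < x1+x2) \<or> (0<x2 \<and> y4 < x0+x2 \<and> y5 < x1+x2))
  \<longleftrightarrow> \<not> ((x0=0 \<and> y5=0 \<and> x1=x2 \<and> y3=x1 \<and> y4=x1 \<and> x1>0) \<or> (x1=0\<and>y4=0\<and>x0=x2\<and>y3=x0\<and>y5=x0\<and>x0>0)
     \<or> (x2=0\<and>y3=0\<and>x0=x1\<and>y4=x0\<and>y5=x0\<and>x0>0))" (is "?D \<longleftrightarrow> \<not> ?P")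
proof
  assume ?D then show "\<not> ?P" by auto
next
  assume nP: "\<not> ?P"
  show ?D
  proof (rule ccontr)
  assume nD: "\<not> ?D"
  have ?P
  proof (cases "y3 = x0+x1")
    case E3: True
    show ?thesis
    proof (cases "y4 = x0+x2")
      case True then show ?thesis using E3 R W nt by (simp; arith)
    next
      case nE4: False
      show ?thesis
      proof (cases "y5 = x1+x2")
        case True then show ?thesis using E3 R W nt by (simp; arith)
      next
        case False then show ?thesis using E3 nE4 nD R W nt by (simp; arith)
      qed
    qed
  next
    case nE3: False
    show ?thesis
    proof (cases "y4 = x0+x2")
      case E4: True
      show ?thesis
      proof (cases "y5 = x1+x2")
        case True then show ?thesis using E4 R W nt by (simp; arith)
      next
        case False then show ?thesis using E4 nE3 nD R W nt by (simp; arith)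
      qed
    next
      case nE4: False
      show ?thesis
      proof (cases "y5 = x1+x2")
        case True then show ?thesis using nE3 nE4 nD R W nt by (simp; arith)
      next
        case False then show ?thesis using nE3 nE4 nD R W nt by (simp; arith)
      qed
    qed
  qed
  then show False using nP by (simp; arith)
  qed
qed

lemma ex4: "(\<exists>i<(4::nat). Q i) \<longleftrightarrow> Q 0 \<or> Q 1 \<or> Q 2 \<or> Q 3"
  by (auto simp: less_Suc_eq numeral_eq_Suc)

lemma core0:
  assumes a: "a = [a0,a1,a2,a3,a4,a5]" and "reduction_applies 0 a"
    and "\<not> trivial_curve a" and "\<forall>Y<4. facet_weight Y a \<le> facet_weight 0 a"
  shows "(\<exists>i<4. 0 < lk (mF 0 a) i \<and> pc6 id (red_tuple 0 a) (mF 0 a - sg i 1)) \<longleftrightarrow> \<not> pattern a"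
proof -
  have w0: "facet_weight 0 a \<le> facet_weight 0 a" and w1: "facet_weight 1 a \<le> facet_weight 0 a"
    and w2: "facet_weight 2 a \<le> facet_weight 0 a" and w3: "facet_weight 3 a \<le> facet_weight 0 a"
    using assms(4) by auto
  have nt: "a0 \<noteq> 0 \<or> a1 \<noteq> 0 \<or> a2 \<noteq> 0 \<or> a3 \<noteq> 0 \<or> a4 \<noteq> 0 \<or> a5 \<noteq> 0"
    using assms(3) unfolding a trivial_curve_def by (auto simp: less_Suc_eq numeral_eq_Suc)
  have R: "a3 \<le> a0+a1" "a4 \<le> a0+a2" "a5 \<le> a1+a2" using assms(2) unfolding a reduction_applies_def by simp_all
  have W: "a3+a4 \<le> a1+a2" "a3+a5 \<le> a0+a2" "a4+a5 \<le> a0+a1"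
    using w0 w1 w2 w3 unfolding a facet_weight_def by simp_all
  have ac: "((0 < a0 \<and> a3 < a0+a1 \<and> a4 < a0+a2) \<or> (0 < a1 \<and> a3 < a0+a1 \<and> a5 < a1+a2) \<or> (0 < a2 \<and> a4 < a0+a2 \<and> a5 < a1+a2)) \<longleftrightarrow> \<not> ((a0=0 \<and> a5=0 \<and> a1=a2 \<and> a3=a1 \<and> a4=a1 \<and> a1>0) \<or> (a1=0\<and>a4=0\<and>a0=a2\<and>a3=a0\<and>a5=a0\<and>a0>0)
     \<or> (a2=0\<and>a3=0\<and>a0=a1\<and>a4=a0\<and>a5=a0\<and>a0>0))"
    by (rule arith_core[OF R W nt])
  have m: "mF 0 a = tm 0 a0 a1 a2" unfolding a mF_def by simp
  have P: "pattern a \<longleftrightarrow> ((a0=0 \<and> a5=0 \<and> a1=a2 \<and> a3=a1 \<and> a4=a1 \<and> a1>0) \<or> (a1=0\<and>a4=0\<and>a0=a2\<and>a3=a0\<and>a5=a0\<and>a0>0)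
     \<or> (a2=0\<and>a3=0\<and>a0=a1\<and>a4=a0\<and>a5=a0\<and>a0>0))"
    unfolding a pattern_def by auto
  have q0: "(0 < lk (tm 0 a0 a1 a2) 0 \<and> pc6 id (red_tuple 0 [a0,a1,a2,a3,a4,a5]) (tm 0 a0 a1 a2 - sg 0 1)) \<longleftrightarrow> (False)"
    using R by (simp add: pc6_def red_tuple_def lookup_minus lookup_single when_def lk_tm; arith)
  have q1: "(0 < lk (tm 0 a0 a1 a2) 1 \<and> pc6 id (red_tuple 0 [a0,a1,a2,a3,a4,a5]) (tm 0 a0 a1 a2 - sg 1 1)) \<longleftrightarrow> (0 < a0 \<and> a3 < a0+a1 \<and> a4 < a0+a2)"
    using R by (simp add: pc6_def red_tuple_def lookup_minus lookup_single when_def lk_tm; arith)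
  have q2: "(0 < lk (tm 0 a0 a1 a2) 2 \<and> pc6 id (red_tuple 0 [a0,a1,a2,a3,a4,a5]) (tm 0 a0 a1 a2 - sg 2 1)) \<longleftrightarrow> (0 < a1 \<and> a3 < a0+a1 \<and> a5 < a1+a2)"
    using R by (simp add: pc6_def red_tuple_def lookup_minus lookup_single when_def lk_tm; arith)
  have q3: "(0 < lk (tm 0 a0 a1 a2) 3 \<and> pc6 id (red_tuple 0 [a0,a1,a2,a3,a4,a5]) (tm 0 a0 a1 a2 - sg 3 1)) \<longleftrightarrow> (0 < a2 \<and> a4 < a0+a2 \<and> a5 < a1+a2)"
    using R by (simp add: pc6_def red_tuple_def lookup_minus lookup_single when_def lk_tm; arith)
  show ?thesis
    unfolding ex4 m P unfolding a q0 q1 q2 q3 ac[symmetric] by (simp only: simp_thms)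
qed

lemma core1:
  assumes a: "a = [a0,a1,a2,a3,a4,a5]" and "reduction_applies 1 a"
    and "\<not> trivial_curve a" and "\<forall>Y<4. facet_weight Y a \<le> facet_weight 1 a"
  shows "(\<exists>i<4. 0 < lk (mF 1 a) i \<and> pc6 id (red_tuple 1 a) (mF 1 a - sg i 1)) \<longleftrightarrow> \<not> pattern a"
proof -
  have w0: "facet_weight 0 a \<le> facet_weight 1 a" and w1: "facet_weight 1 a \<le> facet_weight 1 a"
    and w2: "facet_weight 2 a \<le> facet_weight 1 a" and w3: "facet_weight 3 a \<le> facet_weight 1 a"
    using assms(4) by auto
  have nt: "a0 \<noteq> 0 \<or> a3 \<noteq> 0 \<or> a4 \<noteq> 0 \<or> a1 \<noteq> 0 \<or> a2 \<noteq> 0 \<or> a5 \<noteq> 0"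
    using assms(3) unfolding a trivial_curve_def by (auto simp: less_Suc_eq numeral_eq_Suc)
  have R: "a1 \<le> a0+a3" "a2 \<le> a0+a4" "a5 \<le> a3+a4" using assms(2) unfolding a reduction_applies_def by simp_all
  have W: "a1+a2 \<le> a3+a4" "a1+a5 \<le> a0+a4" "a2+a5 \<le> a0+a3"
    using w0 w1 w2 w3 unfolding a facet_weight_def by simp_all
  have ac: "((0 < a0 \<and> a1 < a0+a3 \<and> a2 < a0+a4) \<or> (0 < a3 \<and> a1 < a0+a3 \<and> a5 < a3+a4) \<or> (0 < a4 \<and> a2 < a0+a4 \<and> a5 < a3+a4)) \<longleftrightarrow> \<not> ((a0=0 \<and> a5=0 \<and> a3=a4 \<and> a1=a3 \<and> a2=a3 \<and> a3>0) \<or> (a3=0\<and>a2=0\<and>a0=a4\<and>a1=a0\<and>a5=a0\<and>a0>0)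
     \<or> (a4=0\<and>a1=0\<and>a0=a3\<and>a2=a0\<and>a5=a0\<and>a0>0))"
    by (rule arith_core[OF R W nt])
  have m: "mF 1 a = tm a0 0 a3 a4" unfolding a mF_def by simp
  have P: "pattern a \<longleftrightarrow> ((a0=0 \<and> a5=0 \<and> a3=a4 \<and> a1=a3 \<and> a2=a3 \<and> a3>0) \<or> (a3=0\<and>a2=0\<and>a0=a4\<and>a1=a0\<and>a5=a0\<and>a0>0)
     \<or> (a4=0\<and>a1=0\<and>a0=a3\<and>a2=a0\<and>a5=a0\<and>a0>0))"
    unfolding a pattern_def by auto
  have q0: "(0 < lk (tm a0 0 a3 a4) 0 \<and> pc6 id (red_tuple 1 [a0,a1,a2,a3,a4,a5]) (tm a0 0 a3 a4 - sg 0 1)) \<longleftrightarrow> (0 < a0 \<and> a1 < a0+a3 \<and> a2 < a0+a4)"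
    using R by (simp add: pc6_def red_tuple_def lookup_minus lookup_single when_def lk_tm; arith)
  have q1: "(0 < lk (tm a0 0 a3 a4) 1 \<and> pc6 id (red_tuple 1 [a0,a1,a2,a3,a4,a5]) (tm a0 0 a3 a4 - sg 1 1)) \<longleftrightarrow> (False)"
    using R by (simp add: pc6_def red_tuple_def lookup_minus lookup_single when_def lk_tm; arith)
  have q2: "(0 < lk (tm a0 0 a3 a4) 2 \<and> pc6 id (red_tuple 1 [a0,a1,a2,a3,a4,a5]) (tm a0 0 a3 a4 - sg 2 1)) \<longleftrightarrow> (0 < a3 \<and> a1 < a0+a3 \<and> a5 < a3+a4)"
    using R by (simp add: pc6_def red_tuple_def lookup_minus lookup_single when_def lk_tm; arith)
  have q3: "(0 < lk (tm a0 0 a3 a4) 3 \<and> pc6 id (red_tuple 1 [a0,a1,a2,a3,a4,a5]) (tm a0 0 a3 a4 - sg 3 1)) \<longleftrightarrow> (0 < a4 \<and> a2 < a0+a4 \<and> a5 < a3+a4)"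
    using R by (simp add: pc6_def red_tuple_def lookup_minus lookup_single when_def lk_tm; arith)
  show ?thesis
    unfolding ex4 m P unfolding a q0 q1 q2 q3 ac[symmetric] by (simp only: simp_thms)
qed

lemma core2:
  assumes a: "a = [a0,a1,a2,a3,a4,a5]" and "reduction_applies 2 a"
    and "\<not> trivial_curve a" and "\<forall>Y<4. facet_weight Y a \<le> facet_weight 2 a"
  shows "(\<exists>i<4. 0 < lk (mF 2 a) i \<and> pc6 id (red_tuple 2 a) (mF 2 a - sg i 1)) \<longleftrightarrow> \<not> pattern a"
proof -
  have w0: "facet_weight 0 a \<le> facet_weight 2 a" and w1: "facet_weight 1 a \<le> facet_weight 2 a"
    and w2: "facet_weight 2 a \<le> facet_weight 2 a" and w3: "facet_weight 3 a \<le> facet_weight 2 a"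
    using assms(4) by auto
  have nt: "a1 \<noteq> 0 \<or> a3 \<noteq> 0 \<or> a5 \<noteq> 0 \<or> a0 \<noteq> 0 \<or> a2 \<noteq> 0 \<or> a4 \<noteq> 0"
    using assms(3) unfolding a trivial_curve_def by (auto simp: less_Suc_eq numeral_eq_Suc)
  have R: "a0 \<le> a1+a3" "a2 \<le> a1+a5" "a4 \<le> a3+a5" using assms(2) unfolding a reduction_applies_def by simp_all
  have W: "a0+a2 \<le> a3+a5" "a0+a4 \<le> a1+a5" "a2+a4 \<le> a1+a3"
    using w0 w1 w2 w3 unfolding a facet_weight_def by simp_all
  have ac: "((0 < a1 \<and> a0 < a1+a3 \<and> a2 < a1+a5) \<or> (0 < a3 \<and> a0 < a1+a3 \<and> a4 < a3+a5) \<or> (0 < a5 \<and> a2 < a1+a5 \<and> a4 < a3+a5)) \<longleftrightarrow> \<not> ((a1=0 \<and> a4=0 \<and> a3=a5 \<and> a0=a3 \<and> a2=a3 \<and> a3>0) \<or> (a3=0\<and>a2=0\<and>a1=a5\<and>a0=a1\<and>a4=a1\<and>a1>0)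
     \<or> (a5=0\<and>a0=0\<and>a1=a3\<and>a2=a1\<and>a4=a1\<and>a1>0))"
    by (rule arith_core[OF R W nt])
  have m: "mF 2 a = tm a1 a3 0 a5" unfolding a mF_def by simp
  have P: "pattern a \<longleftrightarrow> ((a1=0 \<and> a4=0 \<and> a3=a5 \<and> a0=a3 \<and> a2=a3 \<and> a3>0) \<or> (a3=0\<and>a2=0\<and>a1=a5\<and>a0=a1\<and>a4=a1\<and>a1>0)
     \<or> (a5=0\<and>a0=0\<and>a1=a3\<and>a2=a1\<and>a4=a1\<and>a1>0))"
    unfolding a pattern_def by auto
  have q0: "(0 < lk (tm a1 a3 0 a5) 0 \<and> pc6 id (red_tuple 2 [a0,a1,a2,a3,a4,a5]) (tm a1 a3 0 a5 - sg 0 1)) \<longleftrightarrow> (0 < a1 \<and> a0 < a1+a3 \<and> a2 < a1+a5)"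
    using R by (simp add: pc6_def red_tuple_def lookup_minus lookup_single when_def lk_tm; arith)
  have q1: "(0 < lk (tm a1 a3 0 a5) 1 \<and> pc6 id (red_tuple 2 [a0,a1,a2,a3,a4,a5]) (tm a1 a3 0 a5 - sg 1 1)) \<longleftrightarrow> (0 < a3 \<and> a0 < a1+a3 \<and> a4 < a3+a5)"
    using R by (simp add: pc6_def red_tuple_def lookup_minus lookup_single when_def lk_tm; arith)
  have q2: "(0 < lk (tm a1 a3 0 a5) 2 \<and> pc6 id (red_tuple 2 [a0,a1,a2,a3,a4,a5]) (tm a1 a3 0 a5 - sg 2 1)) \<longleftrightarrow> (False)"
    using R by (simp add: pc6_def red_tuple_def lookup_minus lookup_single when_def lk_tm; arith)
  have q3: "(0 < lk (tm a1 a3 0 a5) 3 \<and> pc6 id (red_tuple 2 [a0,a1,a2,a3,a4,a5]) (tm a1 a3 0 a5 - sg 3 1)) \<longleftrightarrow> (0 < a5 \<and> a2 < a1+a5 \<and> a4 < a3+a5)"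
    using R by (simp add: pc6_def red_tuple_def lookup_minus lookup_single when_def lk_tm; arith)
  show ?thesis
    unfolding ex4 m P unfolding a q0 q1 q2 q3 ac[symmetric] by (simp only: simp_thms)
qed

lemma core3:
  assumes a: "a = [a0,a1,a2,a3,a4,a5]" and "reduction_applies 3 a"
    and "\<not> trivial_curve a" and "\<forall>Y<4. facet_weight Y a \<le> facet_weight 3 a"
  shows "(\<exists>i<4. 0 < lk (mF 3 a) i \<and> pc6 id (red_tuple 3 a) (mF 3 a - sg i 1)) \<longleftrightarrow> \<not> pattern a"
proof -
  have w0: "facet_weight 0 a \<le> facet_weight 3 a" and w1: "facet_weight 1 a \<le> facet_weight 3 a"
    and w2: "facet_weight 2 a \<le> facet_weight 3 a" and w3: "facet_weight 3 a \<le> facet_weight 3 a"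
    using assms(4) by auto
  have nt: "a2 \<noteq> 0 \<or> a4 \<noteq> 0 \<or> a5 \<noteq> 0 \<or> a0 \<noteq> 0 \<or> a1 \<noteq> 0 \<or> a3 \<noteq> 0"
    using assms(3) unfolding a trivial_curve_def by (auto simp: less_Suc_eq numeral_eq_Suc)
  have R: "a0 \<le> a2+a4" "a1 \<le> a2+a5" "a3 \<le> a4+a5" using assms(2) unfolding a reduction_applies_def by simp_all
  have W: "a0+a1 \<le> a4+a5" "a0+a3 \<le> a2+a5" "a1+a3 \<le> a2+a4"
    using w0 w1 w2 w3 unfolding a facet_weight_def by simp_all
  have ac: "((0 < a2 \<and> a0 < a2+a4 \<and> a1 < a2+a5) \<or> (0 < a4 \<and> a0 < a2+a4 \<and> a3 < a4+a5) \<or> (0 < a5 \<and> a1 < a2+a5 \<and> a3 < a4+a5)) \<longleftrightarrow> \<not> ((a2=0 \<and> a3=0 \<and> a4=a5 \<and> a0=a4 \<and> a1=a4 \<and> a4>0) \<or> (a4=0\<and>a1=0\<and>a2=a5\<and>a0=a2\<and>a3=a2\<and>a2>0)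
     \<or> (a5=0\<and>a0=0\<and>a2=a4\<and>a1=a2\<and>a3=a2\<and>a2>0))"
    by (rule arith_core[OF R W nt])
  have m: "mF 3 a = tm a2 a4 a5 0" unfolding a mF_def by simp
  have P: "pattern a \<longleftrightarrow> ((a2=0 \<and> a3=0 \<and> a4=a5 \<and> a0=a4 \<and> a1=a4 \<and> a4>0) \<or> (a4=0\<and>a1=0\<and>a2=a5\<and>a0=a2\<and>a3=a2\<and>a2>0)
     \<or> (a5=0\<and>a0=0\<and>a2=a4\<and>a1=a2\<and>a3=a2\<and>a2>0))"
    unfolding a pattern_def by auto
  have q0: "(0 < lk (tm a2 a4 a5 0) 0 \<and> pc6 id (red_tuple 3 [a0,a1,a2,a3,a4,a5]) (tm a2 a4 a5 0 - sg 0 1)) \<longleftrightarrow> (0 < a2 \<and> a0 < a2+a4 \<and> a1 < a2+a5)"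
    using R by (simp add: pc6_def red_tuple_def lookup_minus lookup_single when_def lk_tm; arith)
  have q1: "(0 < lk (tm a2 a4 a5 0) 1 \<and> pc6 id (red_tuple 3 [a0,a1,a2,a3,a4,a5]) (tm a2 a4 a5 0 - sg 1 1)) \<longleftrightarrow> (0 < a4 \<and> a0 < a2+a4 \<and> a3 < a4+a5)"
    using R by (simp add: pc6_def red_tuple_def lookup_minus lookup_single when_def lk_tm; arith)
  have q2: "(0 < lk (tm a2 a4 a5 0) 2 \<and> pc6 id (red_tuple 3 [a0,a1,a2,a3,a4,a5]) (tm a2 a4 a5 0 - sg 2 1)) \<longleftrightarrow> (0 < a5 \<and> a1 < a2+a5 \<and> a3 < a4+a5)"
    using R by (simp add: pc6_def red_tuple_def lookup_minus lookup_single when_def lk_tm; arith)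
  have q3: "(0 < lk (tm a2 a4 a5 0) 3 \<and> pc6 id (red_tuple 3 [a0,a1,a2,a3,a4,a5]) (tm a2 a4 a5 0 - sg 3 1)) \<longleftrightarrow> (False)"
    using R by (simp add: pc6_def red_tuple_def lookup_minus lookup_single when_def lk_tm; arith)
  show ?thesis
    unfolding ex4 m P unfolding a q0 q1 q2 q3 ac[symmetric] by (simp only: simp_thms)
qed

lemma core:
  assumes "a = [a0,a1,a2,a3,a4,a5]" "X < 4" "reduction_applies X a"
    and "\<not> trivial_curve a" and "\<forall>Y<4. facet_weight Y a \<le> facet_weight X a"
  shows "(\<exists>i<4. 0 < lk (mF X a) i \<and> pc6 id (red_tuple X a) (mF X a - sg i 1)) \<longleftrightarrow> \<not> pattern a"
  using X4[OF assms(2)] core0[OF assms(1)] core1[OF assms(1)] core2[OF assms(1)] core3[OF assms(1)] assms(3-5)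
  by auto

definition blk :: "(nat \<Rightarrow> nat) \<Rightarrow> nat \<Rightarrow> nat \<Rightarrow> bool" where
  "blk \<sigma> u v = ((u = \<sigma> 0 \<and> v = \<sigma> 1) \<or> (u = \<sigma> 1 \<and> v = \<sigma> 0) \<or> (u = \<sigma> 2 \<and> v = \<sigma> 3) \<or> (u = \<sigma> 3 \<and> v = \<sigma> 2))"

definition cvec :: "(nat \<Rightarrow> nat) \<Rightarrow> nat \<Rightarrow> nat list" where
  "cvec \<sigma> r = map (\<lambda>(u,v). if blk \<sigma> u v then 0 else r) [(0,1),(0,2),(0,3),(1,2),(1,3),(2,3)]"

lemma perm4_vals:
  assumes "\<sigma> permutes {0..<(4::nat)}"
  shows "\<sigma> 0 \<noteq> \<sigma> 1" "\<sigma> 0 \<noteq> \<sigma> 2" "\<sigma> 0 \<noteq> \<sigma> 3" "\<sigma> 1 \<noteq> \<sigma> 2" "\<sigma> 1 \<noteq> \<sigma> 3" "\<sigma> 2 \<noteq> \<sigma> 3"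
    "\<sigma> 0 = 0 \<or> \<sigma> 0 = 1 \<or> \<sigma> 0 = 2 \<or> \<sigma> 0 = 3"
    "\<sigma> 1 = 0 \<or> \<sigma> 1 = 1 \<or> \<sigma> 1 = 2 \<or> \<sigma> 1 = 3"
    "\<sigma> 2 = 0 \<or> \<sigma> 2 = 1 \<or> \<sigma> 2 = 2 \<or> \<sigma> 2 = 3"
    "\<sigma> 3 = 0 \<or> \<sigma> 3 = 1 \<or> \<sigma> 3 = 2 \<or> \<sigma> 3 = 3"
proof -
  have r: "\<sigma> i < 4" if "i < 4" for i
    using permutes_in_image[OF assms, of i] that by auto
  have inj: "\<sigma> i \<noteq> \<sigma> j" if "i < 4" "j < 4" "i \<noteq> j" for i j
    using permutes_inj_on[OF assms] that unfolding inj_on_def by auto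
  show "\<sigma> 0 \<noteq> \<sigma> 1" "\<sigma> 0 \<noteq> \<sigma> 2" "\<sigma> 0 \<noteq> \<sigma> 3" "\<sigma> 1 \<noteq> \<sigma> 2" "\<sigma> 1 \<noteq> \<sigma> 3" "\<sigma> 2 \<noteq> \<sigma> 3"
    using inj by auto
  show "\<sigma> 0 = 0 \<or> \<sigma> 0 = 1 \<or> \<sigma> 0 = 2 \<or> \<sigma> 0 = 3"
    "\<sigma> 1 = 0 \<or> \<sigma> 1 = 1 \<or> \<sigma> 1 = 2 \<or> \<sigma> 1 = 3"
    "\<sigma> 2 = 0 \<or> \<sigma> 2 = 1 \<or> \<sigma> 2 = 2 \<or> \<sigma> 2 = 3"
    "\<sigma> 3 = 0 \<or> \<sigma> 3 = 1 \<or> \<sigma> 3 = 2 \<or> \<sigma> 3 = 3"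
    using r[of 0] r[of 1] r[of 2] r[of 3] by auto
qed

lemma cvec_pattern:
  assumes "\<sigma> permutes {0..<(4::nat)}" "r > 0"
  shows "pattern (cvec \<sigma> r)"
  using perm4_vals[OF assms(1)] assms(2)
  apply (elim disjE)
  apply (simp_all add: cvec_def blk_def pattern_def)
  done


lemma cvec_pc6:
  assumes "\<sigma> permutes {0..<(4::nat)}"
  shows "pc6 \<sigma> [0,r,r,r,r,0] m \<longleftrightarrow> pc6 id (cvec \<sigma> r) m"
  using perm4_vals[OF assms(1)]
  apply (elim disjE)
  apply (auto simp: cvec_def blk_def pc6_def add.commute)
  done

lemma pc6_inj:
  assumes "length a = 6" "length c = 6" and h: "\<And>m. pc6 id a m \<longleftrightarrow> pc6 id c m"
  shows "a = c"
proof -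
  define B where "B = a!0+a!1+a!2+a!3+a!4+a!5+c!0+c!1+c!2+c!3+c!4+c!5"
  have e1: "a!0 \<le> c!0" using h[of "tm (c!0) (0) (B) (B)"] unfolding B_def by (simp add: pc6_def lk_tm)
  have e2: "c!0 \<le> a!0" using h[of "tm (a!0) (0) (B) (B)"] unfolding B_def by (simp add: pc6_def lk_tm)
  have e3: "a!1 \<le> c!1" using h[of "tm (c!1) (B) (0) (B)"] unfolding B_def by (simp add: pc6_def lk_tm)
  have e4: "c!1 \<le> a!1" using h[of "tm (a!1) (B) (0) (B)"] unfolding B_def by (simp add: pc6_def lk_tm)
  have e5: "a!2 \<le> c!2" using h[of "tm (c!2) (B) (B) (0)"] unfolding B_def by (simp add: pc6_def lk_tm)
  have e6: "c!2 \<le> a!2" using h[of "tm (a!2) (B) (B) (0)"] unfolding B_def by (simp add: pc6_def lk_tm)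
  have e7: "a!3 \<le> c!3" using h[of "tm (B) (c!3) (0) (B)"] unfolding B_def by (simp add: pc6_def lk_tm)
  have e8: "c!3 \<le> a!3" using h[of "tm (B) (a!3) (0) (B)"] unfolding B_def by (simp add: pc6_def lk_tm)
  have e9: "a!4 \<le> c!4" using h[of "tm (B) (c!4) (B) (0)"] unfolding B_def by (simp add: pc6_def lk_tm)
  have e10: "c!4 \<le> a!4" using h[of "tm (B) (a!4) (B) (0)"] unfolding B_def by (simp add: pc6_def lk_tm)
  have e11: "a!5 \<le> c!5" using h[of "tm (B) (B) (c!5) (0)"] unfolding B_def by (simp add: pc6_def lk_tm)
  have e12: "c!5 \<le> a!5" using h[of "tm (B) (B) (a!5) (0)"] unfolding B_def by (simp add: pc6_def lk_tm)
  have q: "a!0 = c!0" "a!1 = c!1" "a!2 = c!2" "a!3 = c!3" "a!4 = c!4" "a!5 = c!5"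
    using e1 e2 e3 e4 e5 e6 e7 e8 e9 e10 e11 e12 by simp_all
  have "\<forall>i<6. a!i = c!i"
  proof (intro allI impI)
    fix i :: nat assume "i < 6"
    then have "i = 0 \<or> i = 1 \<or> i = 2 \<or> i = 3 \<or> i = 4 \<or> i = 5" by auto
    then show "a!i = c!i" using q by (elim disjE) simp_all
  qed
  then show ?thesis using assms(1,2) by (intro nth_equalityI) auto
qed

lemma special_pattern:
  assumes len: "length a = 6" and nt: "\<not> trivial_curve a"
    and sp: "special_form (tet_ideal a :: 'k::field mpoly4 set)"
  shows "pattern a"
proof -
  obtain \<sigma> r where s: "\<sigma> permutes {0..<4}" and eq: "(tet_ideal a :: 'k mpoly4 set) = perm_tet_ideal \<sigma> [0, r, r, r, r, 0]"
    using sp unfolding special_form_def by blast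
  have eqc: "pc6 id a m \<longleftrightarrow> pc6 id (cvec \<sigma> r) m" for m
  proof -
    have "pc6 id a m \<longleftrightarrow> sg m (1::'k) \<in> tet_ideal a" by (simp add: mon_in_tet)
    also have "\<dots> \<longleftrightarrow> pc6 \<sigma> [0, r, r, r, r, 0] m"
      unfolding eq perm_tet_char[OF permutes_inj_on[OF s]] by simp
    finally show ?thesis using cvec_pc6[OF s] by simp
  qed
  have ac: "a = cvec \<sigma> r" by (rule pc6_inj) (use len eqc in \<open>auto simp: cvec_def\<close>)
  have "r \<noteq> 0"
  proof
    assume "r = 0"
    then have "\<forall>k<6. a ! k = 0" unfolding ac cvec_def by (auto simp: less_Suc_eq numeral_eq_Suc)
    then show False using nt unfolding trivial_curve_def by blast
  qed
  then show ?thesis unfolding ac by (intro cvec_pattern[OF s]) simp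
qed

lemma pattern_special:
  assumes pa: "pattern a"
  shows "special_form (tet_ideal a :: 'k::field mpoly4 set)"
proof -
  obtain r where r: "a = [0,r,r,r,r,0] \<or> a = [r,0,r,r,0,r] \<or> a = [r,r,0,0,r,r]"
    using pa unfolding pattern_def by blast
  have gen: "special_form (tet_ideal a :: 'k mpoly4 set)" if s: "\<sigma> permutes {0..<4}" and c: "cvec \<sigma> r = a" for \<sigma>
  proof -
    have "(tet_ideal a :: 'k mpoly4 set) = perm_tet_ideal \<sigma> [0, r, r, r, r, 0]"
      unfolding tet_char perm_tet_char[OF permutes_inj_on[OF s]] cvec_pc6[OF s] c ..
    then show ?thesis unfolding special_form_def using s by blast
  qed
  from r show ?thesis
  proof (elim disjE)
    assume "a = [0,r,r,r,r,0]"
    then show ?thesis by (intro gen[of id]) (auto simp: permutes_id cvec_def blk_def)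
  next
    assume "a = [r,0,r,r,0,r]"
    then show ?thesis by (intro gen[of "transpose 1 2"]) (auto simp: permutes_swap_id cvec_def blk_def transpose_def)
  next
    assume "a = [r,r,0,0,r,r]"
    then show ?thesis by (intro gen[of "transpose 1 3"]) (auto simp: permutes_swap_id cvec_def blk_def transpose_def)
  qed
qed

lemma special_iff:
  assumes "length a = 6" "\<not> trivial_curve a"
  shows "special_form (tet_ideal a :: 'k::field mpoly4 set) \<longleftrightarrow> pattern a"
  using special_pattern[OF assms] pattern_special by blast

lemma factor_mon:
  assumes "\<And>m. m \<in> K \<Longrightarrow> le_m g m"
  shows "(\<Sum>m\<in>K. sg m (c m)) = sg g (1::'k::field) * (\<Sum>m\<in>K. sg (m - g) (c m))"
  unfolding sum_distrib_left
proof (rule sum.cong)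
  fix x assume "x \<in> K"
  show "sg x (c x) = sg g 1 * sg (x - g) (c x)"
    using single_decomp[OF assms[OF \<open>x \<in> K\<close>], of "c x"] by (simp add: mult.commute)
qed simp

lemma keys_sum_single: "ks (\<Sum>m\<in>K. sg (f m) (c m :: 'k::field)) \<subseteq> f ` K"
proof -
  have "ks (\<Sum>m\<in>K. sg (f m) (c m)) \<subseteq> (\<Union>m\<in>K. ks (sg (f m) (c m)))" by (rule keys_sum)
  also have "\<dots> \<subseteq> f ` K" by auto
  finally show ?thesis .
qed

lemma split_poly:
  fixes p :: "'k::field mpoly4"
  shows "p = (\<Sum>m\<in>{m\<in>ks p. P m}. sg m (lk p m)) + (\<Sum>m\<in>{m\<in>ks p. \<not> P m}. sg m (lk p m))"
proof -
  have "p = (\<Sum>m\<in>ks p. sg m (lk p m))" by (rule poly_expand)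
  also have "\<dots> = (\<Sum>m\<in>{m\<in>ks p. P m} \<union> {m\<in>ks p. \<not> P m}. sg m (lk p m))"
    by (rule sum.cong) auto
  also have "\<dots> = (\<Sum>m\<in>{m\<in>ks p. P m}. sg m (lk p m)) + (\<Sum>m\<in>{m\<in>ks p. \<not> P m}. sg m (lk p m))"
    by (rule sum.union_disjoint) auto
  finally show ?thesis .
qed

lemma le_m_eX: "1 \<le> lk m X \<Longrightarrow> le_m (sg X 1) m"
  unfolding le_m_def by (simp add: lookup_single when_def)

lemma split_var:
  fixes p :: "'k::field mpoly4"
  shows "\<exists>q r. p = sg (sg X 1) 1 * q + r \<and> (\<forall>m\<in>ks r. m \<in> ks p \<and> lk m X = 0)
     \<and> ks q \<subseteq> (\<lambda>m. m - sg X 1) ` {m \<in> ks p. 1 \<le> lk m X}"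
proof -
  define K1 where "K1 = {m\<in>ks p. 1 \<le> lk m X}"
  define K2 where "K2 = {m\<in>ks p. \<not> 1 \<le> lk m X}"
  define q where "q = (\<Sum>m\<in>K1. sg (m - sg X 1) (lk p m))"
  define r where "r = (\<Sum>m\<in>K2. sg m (lk p m))"
  have "p = (\<Sum>m\<in>K1. sg m (lk p m)) + r"
    unfolding K1_def r_def K2_def by (rule split_poly)
  also have "(\<Sum>m\<in>K1. sg m (lk p m)) = sg (sg X 1) 1 * q"
    unfolding q_def by (rule factor_mon) (auto simp: K1_def le_m_def lookup_single when_def)
  finally have 1: "p = sg (sg X 1) 1 * q + r" .
  have 2: "\<forall>m\<in>ks r. m \<in> ks p \<and> lk m X = 0"
    using keys_sum_single[of "\<lambda>m. m" "\<lambda>m. lk p m" K2] unfolding r_def K2_def by auto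
  have 3: "ks q \<subseteq> (\<lambda>m. m - sg X 1) ` {m \<in> ks p. 1 \<le> lk m X}"
    using keys_sum_single[of "\<lambda>m. m - sg X 1" "\<lambda>m. lk p m" K1] unfolding q_def K1_def by auto
  show ?thesis using 1 2 3 by blast
qed

lemma mon_nz: "sg m (1::'k::field) \<noteq> 0"
  by (metis lookup_single_eq lookup_zero one_neq_zero)

lemma divis:
  fixes A B :: "'k::field mpoly4"
  assumes eq: "sg (sg X 1) 1 * A = sg g 1 * B" and gX: "lk g X = 0"
  shows "\<exists>C. B = sg (sg X 1) 1 * C \<and> A = sg g 1 * C"
proof -
  obtain q r where qr: "B = sg (sg X 1) 1 * q + r" and r0: "\<forall>m\<in>ks r. lk m X = 0"
    using split_var[of B X] by blast
  have e2: "sg g 1 * r = sg (sg X 1) 1 * (A - sg g 1 * q)"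
    using eq unfolding qr by (simp add: algebra_simps)
  have k1: "\<forall>m\<in>ks (sg g (1::'k) * r). lk m X = 0"
    using keys_single_mult[of g r] r0 gX by (force simp: lookup_add)
  have k2: "\<forall>m\<in>ks (sg (sg X 1) (1::'k) * (A - sg g 1 * q)). 1 \<le> lk m X"
    using keys_single_mult[of "sg X 1" "A - sg g 1 * q"] by (force simp: lookup_add)
  have "ks (sg g (1::'k) * r) = {}" using k1 k2 unfolding e2 by fastforce
  then have "sg g (1::'k) * r = 0" by simp
  then have "r = 0" by (metis mon_nz mult_eq_0_iff)
  then have "sg (sg X 1) 1 * A = sg (sg X 1) 1 * (sg g 1 * q)" using eq qr by (simp add: algebra_simps)
  then have "A = sg g 1 * q" by (metis mon_nz mult_left_cancel)
  then show ?thesis using qr \<open>r = 0\<close> by auto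
qed

lemma in_max_iff: "in_max p \<longleftrightarrow> 0 \<notin> ks p"
  unfolding in_max_def by (simp add: in_keys_iff)

lemma add_eq_0_pm: "(a::nat \<Rightarrow>\<^sub>0 nat) + b = 0 \<Longrightarrow> a = 0 \<and> b = 0"
  by (metis add_is_0 lookup_add lookup_zero poly_mapping_eqI)

lemma in_max_mult1: "in_max p \<Longrightarrow> in_max (p * q)"
  unfolding in_max_iff
proof
  assume "0 \<notin> ks p" "0 \<in> ks (p * q)"
  then obtain a b where "a \<in> ks p" "b \<in> ks q" "0 = a + b" using keys_mult[of p q] by blast
  then show False using add_eq_0_pm[of a b] \<open>0 \<notin> ks p\<close> by auto
qed

lemma in_max_mult2: "in_max q \<Longrightarrow> in_max (p * q)"
  unfolding in_max_iff
proof
  assume "0 \<notin> ks q" "0 \<in> ks (p * q)"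
  then obtain a b where "a \<in> ks p" "b \<in> ks q" "0 = a + b" using keys_mult[of p q] by blast
  then show False using add_eq_0_pm[of a b] \<open>0 \<notin> ks q\<close> by auto
qed

lemma in_max_add: "in_max p \<Longrightarrow> in_max q \<Longrightarrow> in_max (p + q)"
  unfolding in_max_def by (simp add: lookup_add)

lemma in_max_diff: "in_max p \<Longrightarrow> in_max q \<Longrightarrow> in_max (p - q)"
  unfolding in_max_def by (simp add: lookup_minus)

lemma in_max_sum: "(\<And>i. i \<in> A \<Longrightarrow> in_max (f i)) \<Longrightarrow> in_max (sum f A)"
  unfolding in_max_def by (simp add: lookup_sum)

lemma in_max_zero: "in_max 0" unfolding in_max_def by simp

lemma eX_nz: "sg X (1::nat) \<noteq> 0"
  by (metis lookup_single_eq lookup_zero one_neq_zero)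

lemma in_max_var: "in_max (sg (sg X 1) (1::'k::field))"
  unfolding in_max_def using eX_nz[of X] by (simp add: lookup_single when_def)

lemma mdeg_superset: "finite K \<Longrightarrow> ks m \<subseteq> K \<Longrightarrow> mdeg m = (\<Sum>i\<in>K. lk m i)"
  unfolding mdeg_def by (rule sum.mono_neutral_left) (auto simp: in_keys_iff)

lemma mdeg_add: "mdeg (m + m') = mdeg m + mdeg m'"
proof -
  let ?K = "ks m \<union> ks m'"
  have "mdeg (m + m') = (\<Sum>i\<in>?K. lk (m + m') i)"
    by (rule mdeg_superset) (use keys_add[of m m'] in auto)
  also have "\<dots> = (\<Sum>i\<in>?K. lk m i) + (\<Sum>i\<in>?K. lk m' i)" by (simp add: lookup_add sum.distrib)
  also have "\<dots> = mdeg m + mdeg m'"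
    by (subst (1 2) mdeg_superset[of ?K]) auto
  finally show ?thesis .
qed

lemma mdeg_eX: "mdeg (sg X 1) = 1"
proof -
  have "ks (sg X (1::nat)) = {X}" by simp
  then show ?thesis unfolding mdeg_def by simp
qed

lemma homog_mult: "homog p d \<Longrightarrow> homog q d' \<Longrightarrow> homog (p * q) (d + d')"
  unfolding homog_def
proof (elim disjE)
  assume hp: "\<forall>m\<in>ks p. int (mdeg m) = d" and hq: "\<forall>m\<in>ks q. int (mdeg m) = d'"
  show "p * q = 0 \<or> (\<forall>m\<in>ks (p * q). int (mdeg m) = d + d')"
    using keys_mult[of p q] hp hq by (force simp: mdeg_add)
qed auto

lemma homog_zero: "homog 0 d" unfolding homog_def by simp

lemma homog_mon: "homog (sg m (1::'k::field)) (int (mdeg m))" unfolding homog_def by simp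

lemma homog_uminus: "homog p d \<Longrightarrow> homog (- p) d" unfolding homog_def by simp

lemma tdeg_mon: "tdeg (sg m (1::'k::field)) = mdeg m"
  unfolding tdeg_def by (simp add: mon_nz)

lemma aug_sum:
  "(\<Sum>j<Suc (r 0). cone_aug L F r g j * v j) = L * (\<Sum>j<r 0. g j * v j) - F * v (r 0)"
proof -
  have "(\<Sum>j<r 0. cone_aug L F r g j * v j) = (\<Sum>j<r 0. L * (g j * v j))"
    by (rule sum.cong) (auto simp: cone_aug_def mult.assoc)
  then show ?thesis by (simp add: sum_distrib_left cone_aug_def)
qed

lemma d1_row:
  assumes "k < r 0"
  shows "(\<Sum>j<Suc (r 1). cone_mat L r h M 1 k j * w j) = (\<Sum>j<r 1. M 1 k j * w j) + h k * w (r 1)"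
proof -
  have "(\<Sum>j<r 1. cone_mat L r h M 1 k j * w j) = (\<Sum>j<r 1. M 1 k j * w j)"
    by (rule sum.cong) (use assms in \<open>auto simp: cone_mat_def\<close>)
  then show ?thesis using assms by (simp add: cone_mat_def)
qed

lemma d1_row0:
  "(\<Sum>j<Suc (r 1). cone_mat L r h M 1 (r 0) j * w j) = L * w (r 1)"
proof -
  have "(\<Sum>j<r 1. cone_mat L r h M 1 (r 0) j * w j) = 0"
    by (rule sum.neutral) (auto simp: cone_mat_def)
  then show ?thesis by (simp add: cone_mat_def)
qed

lemma d2_row:
  assumes "k < r 1"
  shows "(\<Sum>j<r 2. cone_mat L r h M 2 k j * w j) = (\<Sum>j<r 2. M 2 k j * w j)"
  by (rule sum.cong) (use assms in \<open>auto simp: cone_mat_def\<close>)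

lemma d2_row1:
  "(\<Sum>j<r 2. cone_mat L r h M 2 (r 1) j * w j) = 0"
  by (rule sum.neutral) (auto simp: cone_mat_def)

lemma cr0: "cone_rank r 0 = Suc (r 0)" and cr1: "cone_rank r 1 = Suc (r 1)"
  and crge: "i \<ge> 2 \<Longrightarrow> cone_rank r i = r i"
  by (auto simp: cone_rank_def)

lemma cone_res:
  fixes L F :: "'k::field mpoly4"
  assumes res: "graded_free_res I N r dg g M"
    and hL: "homog L 1" and hF: "homog F (int e)"
    and hh: "\<forall>j<r 0. homog (h j) (int e - dg 0 j)"
    and lift: "(\<Sum>j<r 0. g j * h j) = F"
    and Jeq: "J = {L * x - F * y | x y. x \<in> I}"
    and divis: "\<And>A B. L * A = F * B \<Longrightarrow> \<exists>C. B = L * C \<and> A = F * C"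
    and Lnz: "L \<noteq> 0"
  shows "graded_free_res J (cone_len N) (cone_rank r) (cone_deg r dg e) (cone_aug L F r g) (cone_mat L r h M)"
proof -
  note R = res[unfolded graded_free_res_def]
  have Rlen: "\<forall>i>N. r i = 0" using R by blast
  have Rg: "\<forall>j<r 0. homog (g j) (dg 0 j)" using R by blast
  have RM: "\<forall>i\<ge>1. \<forall>k<r (i - 1). \<forall>j<r i. homog (M i k j) (dg i j - dg (i - 1) k)" using R by blast
  have Rim: "{\<Sum>j<r 0. g j * v j | v. True} = I" using R by blast
  have R0: "\<And>v. (\<Sum>j<r 0. g j * v j) = 0 \<longleftrightarrow> (\<exists>w. \<forall>k<r 0. v k = (\<Sum>j<r 1. M 1 k j * w j))"
    using R by blast
  have Ri: "\<And>i v. i \<ge> 1 \<Longrightarrow> (\<forall>k<r (i - 1). (\<Sum>j<r i. M i k j * v j) = 0) \<longleftrightarrow>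
          (\<exists>w. \<forall>k<r i. v k = (\<Sum>j<r (Suc i). M (Suc i) k j * w j))"
    using R by blast
  have c1: "\<forall>i>cone_len N. cone_rank r i = 0"
    using Rlen by (auto simp: cone_len_def cone_rank_def)
  have c2: "\<forall>j<cone_rank r 0. homog (cone_aug L F r g j) (cone_deg r dg e 0 j)"
  proof (intro allI impI)
    fix j assume "j < cone_rank r 0"
    then have j: "j < Suc (r 0)" by (simp add: cr0)
    show "homog (cone_aug L F r g j) (cone_deg r dg e 0 j)"
    proof (cases "j = r 0")
      case True then show ?thesis using hF by (simp add: cone_aug_def cone_deg_def homog_uminus)
    next
      case False
      then have "j < r 0" using j by simp
      then have "homog (L * g j) (1 + dg 0 j)" using homog_mult[OF hL] Rg by blast
      then show ?thesis using False by (simp add: cone_aug_def cone_deg_def add.commute)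
    qed
  qed
  have c3: "\<forall>i\<ge>1. \<forall>k<cone_rank r (i - 1). \<forall>j<cone_rank r i.
      homog (cone_mat L r h M i k j) (cone_deg r dg e i j - cone_deg r dg e (i - 1) k)"
  proof (intro allI impI)
    fix i k j assume i: "1 \<le> i" and k: "k < cone_rank r (i - 1)" and j: "j < cone_rank r i"
    show "homog (cone_mat L r h M i k j) (cone_deg r dg e i j - cone_deg r dg e (i - 1) k)"
    proof (cases "i = 1")
      case True
      then have k': "k < Suc (r 0)" and j': "j < Suc (r 1)" using k j by (auto simp: cone_rank_def)
      show ?thesis
      proof (cases "j = r 1")
        case jT: True
        show ?thesis
        proof (cases "k = r 0")
          case True then show ?thesis using jT \<open>i = 1\<close> hL by (simp add: cone_mat_def cone_deg_def)
        next
          case False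
          then have "k < r 0" using k' by simp
          then show ?thesis using jT \<open>i = 1\<close> hh False by (simp add: cone_mat_def cone_deg_def)
        qed
      next
        case jF: False
        then have "j < r 1" using j' by simp
        show ?thesis
        proof (cases "k = r 0")
          case True then show ?thesis using jF \<open>i = 1\<close> by (simp add: cone_mat_def cone_deg_def homog_zero)
        next
          case False
          then have "k < r 0" using k' by simp
          then have "homog (M 1 k j) (dg 1 j - dg 0 k)" using RM \<open>j < r 1\<close> by fastforce
          then show ?thesis using jF \<open>i = 1\<close> False by (simp add: cone_mat_def cone_deg_def)
        qed
      qed
    next
      case iF: False
      show ?thesis
      proof (cases "i = 2")
        case True
        then have k': "k < Suc (r 1)" and j': "j < r 2" using k j by (auto simp: cone_rank_def)
        show ?thesis
        proof (cases "k = r 1")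
          case True then show ?thesis using \<open>i = 2\<close> by (simp add: cone_mat_def homog_zero)
        next
          case False
          then have "k < r 1" using k' by simp
          then have "homog (M 2 k j) (dg 2 j - dg 1 k)" using RM[rule_format, of 2 k j] \<open>k < r 1\<close> j' by simp
          then show ?thesis using \<open>i = 2\<close> False by (simp add: cone_mat_def cone_deg_def)
        qed
      next
        case False
        then have i3: "i \<ge> 3" using i iF by simp
        then have k': "k < r (i - 1)" and j': "j < r i" using k j by (auto simp: crge)
        then have "homog (M i k j) (dg i j - dg (i - 1) k)" using RM i by blast
        then show ?thesis using i3 by (simp add: cone_mat_def cone_deg_def, subgoal_tac "i - 1 \<noteq> 1 \<and> i \<noteq> 1 \<and> i \<noteq> 2 \<and> i \<noteq> 0 \<and> i - 1 \<noteq> 0", auto)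
      qed
    qed
  qed
  have c4: "{\<Sum>j<cone_rank r 0. cone_aug L F r g j * v j | v. True} = J"
  proof
    show "{\<Sum>j<cone_rank r 0. cone_aug L F r g j * v j | v. True} \<subseteq> J"
    proof
      fix p assume "p \<in> {\<Sum>j<cone_rank r 0. cone_aug L F r g j * v j | v. True}"
      then obtain v where p: "p = (\<Sum>j<Suc (r 0). cone_aug L F r g j * v j)" by (auto simp: cr0)
      have "(\<Sum>j<r 0. g j * v j) \<in> I" using Rim by blast
      then show "p \<in> J" unfolding p aug_sum Jeq by blast
    qed
  next
    show "J \<subseteq> {\<Sum>j<cone_rank r 0. cone_aug L F r g j * v j | v. True}"
    proof
      fix p assume "p \<in> J"
      then obtain x y where p: "p = L * x - F * y" and x: "x \<in> I" using Jeq by blast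
      obtain u where u: "x = (\<Sum>j<r 0. g j * u j)" using x Rim by blast
      define v where "v = u(r 0 := y)"
      have "(\<Sum>j<r 0. g j * v j) = x" unfolding u v_def by (rule sum.cong) auto
      then have "p = (\<Sum>j<Suc (r 0). cone_aug L F r g j * v j)" unfolding aug_sum p by (simp add: v_def)
      then show "p \<in> {\<Sum>j<cone_rank r 0. cone_aug L F r g j * v j | v. True}" by (auto simp: cr0)
    qed
  qed
  have c5: "\<forall>v. (\<Sum>j<cone_rank r 0. cone_aug L F r g j * v j) = 0 \<longleftrightarrow>
          (\<exists>w. \<forall>k<cone_rank r 0. v k = (\<Sum>j<cone_rank r 1. cone_mat L r h M 1 k j * w j))"
  proof (intro allI iffI)
    fix v assume "(\<Sum>j<cone_rank r 0. cone_aug L F r g j * v j) = 0"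
    then have "L * (\<Sum>j<r 0. g j * v j) - F * v (r 0) = 0" unfolding cr0 aug_sum .
    then have "L * (\<Sum>j<r 0. g j * v j) = F * v (r 0)" by simp
    then obtain C where C: "v (r 0) = L * C" "(\<Sum>j<r 0. g j * v j) = F * C" using divis[of "\<Sum>j<r 0. g j * v j" "v (r 0)"] by auto
    have "(\<Sum>j<r 0. g j * (v j - h j * C)) = (\<Sum>j<r 0. g j * v j) - (\<Sum>j<r 0. g j * h j) * C"
      by (simp add: right_diff_distrib sum_subtractf sum_distrib_right mult.assoc)
    also have "\<dots> = 0" using C lift by simp
    finally have "\<exists>w'. \<forall>k<r 0. v k - h k * C = (\<Sum>j<r 1. M 1 k j * w' j)"
      using R0[of "\<lambda>j. v j - h j * C"] by simp
    then obtain w' where w': "\<forall>k<r 0. v k - h k * C = (\<Sum>j<r 1. M 1 k j * w' j)" ..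
    define w where "w = w'(r 1 := C)"
    have sw: "(\<Sum>j<r 1. M 1 k j * w j) = (\<Sum>j<r 1. M 1 k j * w' j)" for k
      unfolding w_def by (rule sum.cong) auto
    have "\<forall>k<Suc (r 0). v k = (\<Sum>j<Suc (r 1). cone_mat L r h M 1 k j * w j)"
    proof (intro allI impI)
      fix k assume "k < Suc (r 0)"
      show "v k = (\<Sum>j<Suc (r 1). cone_mat L r h M 1 k j * w j)"
      proof (cases "k = r 0")
        case True then show ?thesis unfolding True d1_row0 using C by (simp add: w_def)
      next
        case False
        then have "k < r 0" using \<open>k < Suc (r 0)\<close> by simp
        have "v k = (\<Sum>j<r 1. M 1 k j * w' j) + h k * C"
          using w'[rule_format, OF \<open>k < r 0\<close>] by (simp add: diff_eq_eq)
        then show ?thesis unfolding d1_row[of k r, OF \<open>k < r 0\<close>] sw by (simp add: w_def)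
      qed
    qed
    then show "\<exists>w. \<forall>k<cone_rank r 0. v k = (\<Sum>j<cone_rank r 1. cone_mat L r h M 1 k j * w j)"
      unfolding cr0 cr1 by blast
  next
    fix v assume "\<exists>w. \<forall>k<cone_rank r 0. v k = (\<Sum>j<cone_rank r 1. cone_mat L r h M 1 k j * w j)"
    then obtain w where w: "\<forall>k<Suc (r 0). v k = (\<Sum>j<Suc (r 1). cone_mat L r h M 1 k j * w j)"
      unfolding cr0 cr1 by blast
    have vk: "\<forall>k<r 0. v k = (\<Sum>j<r 1. M 1 k j * w j) + h k * w (r 1)" using w d1_row by auto
    have v0: "v (r 0) = L * w (r 1)" using w d1_row0 by auto
    have z: "(\<Sum>k<r 0. g k * (\<Sum>j<r 1. M 1 k j * w j)) = 0"
      using R0[of "\<lambda>k. \<Sum>j<r 1. M 1 k j * w j"] by auto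
    have "(\<Sum>j<r 0. g j * v j) = (\<Sum>k<r 0. g k * ((\<Sum>j<r 1. M 1 k j * w j) + h k * w (r 1)))"
      by (rule sum.cong) (use vk in auto)
    also have "\<dots> = (\<Sum>k<r 0. g k * (\<Sum>j<r 1. M 1 k j * w j)) + (\<Sum>k<r 0. g k * h k) * w (r 1)"
      by (simp add: distrib_left sum.distrib sum_distrib_right mult.assoc)
    also have "\<dots> = F * w (r 1)" using z lift by simp
    finally show "(\<Sum>j<cone_rank r 0. cone_aug L F r g j * v j) = 0"
      unfolding cr0 aug_sum v0 by simp
  qed
  have c6: "\<forall>i\<ge>1. \<forall>v. (\<forall>k<cone_rank r (i - 1). (\<Sum>j<cone_rank r i. cone_mat L r h M i k j * v j) = 0) \<longleftrightarrow>
          (\<exists>w. \<forall>k<cone_rank r i. v k = (\<Sum>j<cone_rank r (Suc i). cone_mat L r h M (Suc i) k j * w j))"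
  proof (intro allI impI)
    fix i :: nat and v assume i: "1 \<le> i"
    show "(\<forall>k<cone_rank r (i - 1). (\<Sum>j<cone_rank r i. cone_mat L r h M i k j * v j) = 0) \<longleftrightarrow>
          (\<exists>w. \<forall>k<cone_rank r i. v k = (\<Sum>j<cone_rank r (Suc i). cone_mat L r h M (Suc i) k j * w j))"
    proof (cases "i = 1")
      case True
      have R1: "(\<forall>k<r 0. (\<Sum>j<r 1. M 1 k j * v j) = 0) \<longleftrightarrow>
          (\<exists>w. \<forall>k<r 1. v k = (\<Sum>j<r 2. M 2 k j * w j))" using Ri[of 1 v] by (simp add: numeral_2_eq_2)
      have e1: "cone_rank r (1 - 1) = Suc (r 0)" "cone_rank r 1 = Suc (r 1)" "cone_rank r (Suc 1) = r 2"
        by (simp_all add: cone_rank_def numeral_2_eq_2)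
      have e2: "cone_mat L r h M (Suc 1) = cone_mat L r h M 2" by (simp add: numeral_2_eq_2)
      show ?thesis unfolding True e1 e2
      proof
        assume a: "\<forall>k<Suc (r 0). (\<Sum>j<Suc (r 1). cone_mat L r h M 1 k j * v j) = 0"
        then have "L * v (r 1) = 0" using d1_row0[of L r h M v] by auto
        then have v1: "v (r 1) = 0" using Lnz by simp
        have "\<forall>k<r 0. (\<Sum>j<r 1. M 1 k j * v j) = 0"
        proof (intro allI impI)
          fix k assume "k < r 0"
          then show "(\<Sum>j<r 1. M 1 k j * v j) = 0"
            using a d1_row[of k r L h M v] v1 by auto
        qed
        then obtain w where w: "\<forall>k<r 1. v k = (\<Sum>j<r 2. M 2 k j * w j)" using R1 by blast
        have "\<forall>k<Suc (r 1). v k = (\<Sum>j<r 2. cone_mat L r h M 2 k j * w j)"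
        proof (intro allI impI)
          fix k assume "k < Suc (r 1)"
          then show "v k = (\<Sum>j<r 2. cone_mat L r h M 2 k j * w j)"
            using w v1 d2_row[of k r L h M w] d2_row1[of L r h M w] by (cases "k = r 1") auto
        qed
        then show "\<exists>w. \<forall>k<Suc (r 1). v k = (\<Sum>j<r 2. cone_mat L r h M 2 k j * w j)" by blast
      next
        assume "\<exists>w. \<forall>k<Suc (r 1). v k = (\<Sum>j<r 2. cone_mat L r h M 2 k j * w j)"
        then obtain w where w: "\<forall>k<Suc (r 1). v k = (\<Sum>j<r 2. cone_mat L r h M 2 k j * w j)" by blast
        have v1: "v (r 1) = 0" using w d2_row1[of L r h M w] by auto
        have "\<forall>k<r 1. v k = (\<Sum>j<r 2. M 2 k j * w j)" using w d2_row[of _ r L h M w] by auto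
        then have z: "\<forall>k<r 0. (\<Sum>j<r 1. M 1 k j * v j) = 0" using R1 by blast
        show "\<forall>k<Suc (r 0). (\<Sum>j<Suc (r 1). cone_mat L r h M 1 k j * v j) = 0"
        proof (intro allI impI)
          fix k assume "k < Suc (r 0)"
          then show "(\<Sum>j<Suc (r 1). cone_mat L r h M 1 k j * v j) = 0"
            using z v1 d1_row[of k r L h M v] d1_row0[of L r h M v] by (cases "k = r 0") auto
        qed
      qed
    next
      case iF: False
      show ?thesis
      proof (cases "i = 2")
        case True
        have R2: "(\<forall>k<r 1. (\<Sum>j<r 2. M 2 k j * v j) = 0) \<longleftrightarrow>
          (\<exists>w. \<forall>k<r 2. v k = (\<Sum>j<r 3. M 3 k j * w j))" using Ri[of 2 v] by (simp add: numeral_3_eq_3 numeral_2_eq_2)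
        have l: "(\<forall>k<cone_rank r (i - 1). (\<Sum>j<cone_rank r i. cone_mat L r h M i k j * v j) = 0) \<longleftrightarrow>
           (\<forall>k<r 1. (\<Sum>j<r 2. M 2 k j * v j) = 0)"
        proof -
          have cr: "cone_rank r (2 - 1) = Suc (r 1)" "cone_rank r 2 = r 2" by (simp_all add: cone_rank_def)
          show ?thesis unfolding True cr
          proof
            assume a: "\<forall>k<Suc (r 1). (\<Sum>j<r 2. cone_mat L r h M 2 k j * v j) = 0"
            show "\<forall>k<r 1. (\<Sum>j<r 2. M 2 k j * v j) = 0"
            proof (intro allI impI)
              fix k assume "k < r 1"
              then show "(\<Sum>j<r 2. M 2 k j * v j) = 0" using a[rule_format, of k] d2_row[of k r L h M v] by simp
            qed
          next
            assume a: "\<forall>k<r 1. (\<Sum>j<r 2. M 2 k j * v j) = 0"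
            show "\<forall>k<Suc (r 1). (\<Sum>j<r 2. cone_mat L r h M 2 k j * v j) = 0"
            proof (intro allI impI)
              fix k assume "k < Suc (r 1)"
              then show "(\<Sum>j<r 2. cone_mat L r h M 2 k j * v j) = 0"
                using a d2_row[of k r L h M v] d2_row1[of L r h M v] by (cases "k = r 1") auto
            qed
          qed
        qed
        have rr: "(\<exists>w. \<forall>k<cone_rank r i. v k = (\<Sum>j<cone_rank r (Suc i). cone_mat L r h M (Suc i) k j * w j))
           \<longleftrightarrow> (\<exists>w. \<forall>k<r 2. v k = (\<Sum>j<r 3. M 3 k j * w j))"
          unfolding True by (simp add: crge cone_mat_def numeral_3_eq_3)
        show ?thesis unfolding l rr by (rule R2)
      next
        case False
        then have i3: "i \<ge> 3" using i iF by simp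
        have "Suc i \<noteq> 1" "Suc i \<noteq> 2" using i3 by auto
        then show ?thesis using Ri[of i v] i3 by (simp add: crge cone_mat_def)
      qed
    qed
  qed
  show ?thesis unfolding graded_free_res_def using c1 c2 c3 c4 c5 c6 by blast
qed

lemma Jeq_lemma:
  assumes a: "a = [a0,a1,a2,a3,a4,a5]" and X: "X < 4" and ap: "reduction_applies X a"
  shows "(tet_ideal a :: 'k::field mpoly4 set) =
    {sg (sg X 1) 1 * x - sg (mF X a) 1 * y | x y. x \<in> tet_ideal (red_tuple X a)}"
proof
  show "(tet_ideal a :: 'k mpoly4 set) \<subseteq> {sg (sg X 1) 1 * x - sg (mF X a) 1 * y | x y. x \<in> tet_ideal (red_tuple X a)}"
  proof
    fix p :: "'k mpoly4" assume "p \<in> tet_ideal a"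
    then have pJ: "\<And>m. m \<in> ks p \<Longrightarrow> pc6 id a m" unfolding tet_char by auto
    obtain q r where qr: "p = sg (sg X 1) 1 * q + r" and rk: "\<forall>m\<in>ks r. m \<in> ks p \<and> lk m X = 0"
      and qk: "ks q \<subseteq> (\<lambda>m. m - sg X 1) ` {m \<in> ks p. 1 \<le> lk m X}"
      using split_var[of p X] by blast
    have "q \<in> tet_ideal (red_tuple X a)"
      unfolding tet_char using qk c3[OF a X] pJ by blast
    have "r = (\<Sum>m\<in>ks r. sg m (lk r m))" by (rule poly_expand)
    also have "\<dots> = sg (mF X a) 1 * (\<Sum>m\<in>ks r. sg (m - mF X a) (lk r m))"
      by (rule factor_mon) (use rk pJ c4[OF a X] in blast)
    finally have "p = sg (sg X 1) 1 * q - sg (mF X a) 1 * (- (\<Sum>m\<in>ks r. sg (m - mF X a) (lk r m)))"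
      using qr by simp
    then show "p \<in> {sg (sg X 1) 1 * x - sg (mF X a) 1 * y | x y. x \<in> tet_ideal (red_tuple X a)}"
      using \<open>q \<in> tet_ideal (red_tuple X a)\<close> by blast
  qed
next
  show "{sg (sg X 1) 1 * x - sg (mF X a) 1 * y | x y. x \<in> tet_ideal (red_tuple X a)} \<subseteq> (tet_ideal a :: 'k mpoly4 set)"
  proof
    fix p :: "'k mpoly4" assume "p \<in> {sg (sg X 1) 1 * x - sg (mF X a) 1 * y | x y. x \<in> tet_ideal (red_tuple X a)}"
    then obtain x y where p: "p = sg (sg X 1) 1 * x - sg (mF X a) 1 * y" and x: "x \<in> tet_ideal (red_tuple X a)"
      by blast
    have xk: "\<And>m. m \<in> ks x \<Longrightarrow> pc6 id (red_tuple X a) m" using x unfolding tet_char by auto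
    have k1: "ks (sg (sg X 1) (1::'k) * x) \<subseteq> {m. pc6 id a m}"
      using keys_single_mult[of "sg X 1" x] xk c2[OF a X] by blast
    have k2: "ks (sg (mF X a) (1::'k) * y) \<subseteq> {m. pc6 id a m}"
    proof
      fix m assume "m \<in> ks (sg (mF X a) (1::'k) * y)"
      then obtain b where "m = mF X a + b" using keys_single_mult[of "mF X a" y] by blast
      moreover have "le_m (mF X a) (mF X a + b)" unfolding le_m_def by (simp add: lookup_add)
      ultimately show "m \<in> {m. pc6 id a m}" using pc6_up c1[OF a X ap] by blast
    qed
    have "ks p \<subseteq> {m. pc6 id a m}" using k1 k2 keys_diff[of "sg (sg X 1) (1::'k) * x" "sg (mF X a) 1 * y"]
      unfolding p by blast
    then show "p \<in> tet_ideal a" unfolding tet_char by blast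
  qed
qed

lemma cone_entries:
  assumes M: "\<forall>i\<ge>1. \<forall>k<r (i - 1). \<forall>j<r i. in_max (M i k j)" and L: "in_max L"
  shows "(\<forall>i\<ge>1. \<forall>k<cone_rank r (i - 1). \<forall>j<cone_rank r i. in_max (cone_mat L r h M i k j))
     \<longleftrightarrow> (\<forall>k<r 0. in_max (h k))"
proof
  assume a: "\<forall>i\<ge>1. \<forall>k<cone_rank r (i - 1). \<forall>j<cone_rank r i. in_max (cone_mat L r h M i k j)"
  show "\<forall>k<r 0. in_max (h k)"
  proof (intro allI impI)
    fix k assume "k < r 0"
    then have "in_max (cone_mat L r h M 1 k (r 1))" using a[rule_format, of 1 k "r 1"] by (simp add: cone_rank_def)
    then show "in_max (h k)" using \<open>k < r 0\<close> by (simp add: cone_mat_def)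
  qed
next
  assume hm: "\<forall>k<r 0. in_max (h k)"
  show "\<forall>i\<ge>1. \<forall>k<cone_rank r (i - 1). \<forall>j<cone_rank r i. in_max (cone_mat L r h M i k j)"
  proof (intro allI impI)
    fix i k j assume i: "1 \<le> i" and k: "k < cone_rank r (i - 1)" and j: "j < cone_rank r i"
    show "in_max (cone_mat L r h M i k j)"
    proof (cases "i = 1")
      case True
      then have k': "k < Suc (r 0)" and j': "j < Suc (r 1)" using k j by (auto simp: cone_rank_def)
      show ?thesis
      proof (cases "k = r 0")
        case True then show ?thesis using L \<open>i = 1\<close> by (simp add: cone_mat_def in_max_zero)
      next
        case False
        then have "k < r 0" using k' by simp
        show ?thesis
        proof (cases "j = r 1")
          case True then show ?thesis using hm \<open>k < r 0\<close> \<open>i = 1\<close> False by (simp add: cone_mat_def)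
        next
          case jF: False
          then have "j < r 1" using j' by simp
          then have "in_max (M 1 k j)" using M[rule_format, of 1 k j] \<open>k < r 0\<close> by simp
          then show ?thesis using \<open>i = 1\<close> False jF by (simp add: cone_mat_def)
        qed
      qed
    next
      case iF: False
      show ?thesis
      proof (cases "i = 2")
        case True
        then have k': "k < Suc (r 1)" and j': "j < r 2" using k j by (auto simp: cone_rank_def)
        show ?thesis
        proof (cases "k = r 1")
          case True then show ?thesis using \<open>i = 2\<close> by (simp add: cone_mat_def in_max_zero)
        next
          case False
          then have "k < r 1" using k' by simp
          then have "in_max (M 2 k j)" using M[rule_format, of 2 k j] j' by simp
          then show ?thesis using \<open>i = 2\<close> False by (simp add: cone_mat_def)
        qed
      next
        case False
        then have i3: "i \<ge> 3" using i iF by simp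
        then have "k < r (i - 1)" "j < r i" using k j crge[of "i - 1" r] crge[of i r] by auto
        then have "in_max (M i k j)" using M i by blast
        then show ?thesis using i3 by (simp add: cone_mat_def)
      qed
    qed
  qed
qed

lemma g_in_image:
  fixes g :: "nat \<Rightarrow> 'k::field mpoly4"
  assumes "{\<Sum>j<n. g j * v j | v. True} = S" "j < n"
  shows "g j \<in> S"
proof -
  have "(\<Sum>k<n. g k * (if k = j then 1 else 0)) = (\<Sum>k<n. if k = j then g k else 0)"
    by (rule sum.cong) auto
  also have "\<dots> = g j" using assms(2) by (simp add: sum.delta)
  finally have "g j = (\<Sum>k<n. g k * (\<lambda>k. if k = j then 1 else 0) k)" by simp
  then have "g j \<in> {\<Sum>j<n. g j * v j | v. True}"
    by (intro CollectI exI[of _ "\<lambda>k. if k = j then 1 else 0"]) simp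
  then show ?thesis unfolding assms(1) .
qed

lemma lk_mF_ge4: "i \<ge> 4 \<Longrightarrow> lk (mF X a) i = 0"
  by (simp add: mF_def lk_tm)

lemma hmax_of_cond:
  fixes g h :: "nat \<Rightarrow> 'k::field mpoly4"
  assumes im: "{\<Sum>j<r 0. g j * v j | v. True} = tet_ideal (red_tuple X a)"
    and R0: "\<And>v. (\<Sum>j<r 0. g j * v j) = 0 \<longleftrightarrow> (\<exists>w. \<forall>k<r 0. v k = (\<Sum>j<r 1. M 1 k j * w j))"
    and M1: "\<forall>k<r 0. \<forall>j<r 1. in_max (M 1 k j)"
    and lift: "(\<Sum>j<r 0. g j * h j) = sg (mF X a) 1"
    and cond: "0 < lk (mF X a) i" "pc6 id (red_tuple X a) (mF X a - sg i 1)"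
  shows "\<forall>k<r 0. in_max (h k)"
proof -
  let ?m = "mF X a - sg i 1"
  let ?V = "sg (sg i 1) (1::'k) :: 'k mpoly4"
  have "sg ?m (1::'k) \<in> tet_ideal (red_tuple X a)" using cond(2) by (simp add: mon_in_tet)
  then obtain u where u: "sg ?m 1 = (\<Sum>j<r 0. g j * u j)" using im by blast
  have le: "le_m (sg i 1) (mF X a)" using cond(1) unfolding le_m_def by (simp add: lookup_single when_def)
  have "sg (mF X a) (1::'k) = sg ?m 1 * ?V" by (rule single_decomp[OF le])
  also have "\<dots> = (\<Sum>j<r 0. g j * (?V * u j))" unfolding u sum_distrib_right by (simp add: ac_simps)
  finally have F2: "sg (mF X a) (1::'k) = (\<Sum>j<r 0. g j * (?V * u j))" .
  have "(\<Sum>j<r 0. g j * (h j - ?V * u j)) = (\<Sum>j<r 0. g j * h j) - (\<Sum>j<r 0. g j * (?V * u j))"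
    by (simp add: right_diff_distrib sum_subtractf)
  also have "\<dots> = 0" using lift F2 by simp
  finally obtain w where w: "\<forall>k<r 0. h k - ?V * u k = (\<Sum>j<r 1. M 1 k j * w j)"
    using R0[of "\<lambda>j. h j - ?V * u j"] by auto
  show ?thesis
  proof (intro allI impI)
    fix k assume k: "k < r 0"
    have "in_max (\<Sum>j<r 1. M 1 k j * w j)"
      by (rule in_max_sum) (use M1 k in \<open>auto intro: in_max_mult1\<close>)
    moreover have "in_max (?V * u k)" by (rule in_max_mult1[OF in_max_var])
    ultimately have "in_max ((h k - ?V * u k) + ?V * u k)" using w k by (simp add: in_max_add)
    then show "in_max (h k)" by simp
  qed
qed

lemma not_hmax:
  fixes g h :: "nat \<Rightarrow> 'k::field mpoly4"
  assumes im: "{\<Sum>j<r 0. g j * v j | v. True} = tet_ideal (red_tuple X a)"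
    and lift: "(\<Sum>j<r 0. g j * h j) = sg (mF X a) 1"
    and hm: "\<forall>k<r 0. in_max (h k)"
    and nc: "\<not> (\<exists>i<4. 0 < lk (mF X a) i \<and> pc6 id (red_tuple X a) (mF X a - sg i 1))"
  shows False
proof -
  have z: "lk (g j * h j) (mF X a) = 0" if j: "j < r 0" for j
  proof (rule ccontr)
    assume "lk (g j * h j) (mF X a) \<noteq> 0"
    then have "mF X a \<in> ks (g j * h j)" by (simp add: in_keys_iff)
    then obtain p q where pq: "p \<in> ks (g j)" "q \<in> ks (h j)" "mF X a = p + q"
      using keys_mult[of "g j" "h j"] by blast
    have "q \<noteq> 0" using hm j pq(2) unfolding in_max_iff by auto
    then obtain i where qi: "lk q i \<noteq> 0" by (metis lookup_zero poly_mapping_eqI)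
    have pos: "0 < lk (mF X a) i" using qi pq(3) by (simp add: lookup_add)
    then have i4: "i < 4" using lk_mF_ge4[of i X a] by (cases "i < 4") auto
    have "g j \<in> tet_ideal (red_tuple X a)" by (rule g_in_image[OF im j])
    then have "pc6 id (red_tuple X a) p" using pq(1) unfolding tet_char by auto
    moreover have "le_m p (mF X a - sg i 1)"
      unfolding le_m_def using pq(3) qi by (auto simp: lookup_add lookup_minus lookup_single when_def)
    ultimately have "pc6 id (red_tuple X a) (mF X a - sg i 1)" by (rule pc6_up)
    then show False using nc i4 pos by blast
  qed
  have "lk (sg (mF X a) (1::'k)) (mF X a) = lk (\<Sum>j<r 0. g j * h j) (mF X a)" using lift by simp
  also have "\<dots> = 0" unfolding lookup_sum using z by simp
  finally show False by simp
qed

theorem corollary5p8: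
  fixes a :: "nat list" and X :: nat
    and N :: nat and r :: "nat \<Rightarrow> nat" and dg :: "nat \<Rightarrow> nat \<Rightarrow> int"
    and g :: "nat \<Rightarrow> 'k::field mpoly4" and M :: "nat \<Rightarrow> nat \<Rightarrow> nat \<Rightarrow> 'k mpoly4"
    and h :: "nat \<Rightarrow> 'k mpoly4"
  defines "J \<equiv> (tet_ideal a :: 'k mpoly4 set)"
    and "L \<equiv> (red_L X :: 'k mpoly4)"
    and "F \<equiv> (red_F X a :: 'k mpoly4)"
    and "I \<equiv> (tet_ideal (red_tuple X a) :: 'k mpoly4 set)"
    and "e \<equiv> tdeg (red_F X a :: 'k mpoly4)"
  assumes len: "length a = 6"
    and nontrivial: "\<not> trivial_curve a"
    and nonmin: "non_minimal a"
    and facet: "X < 4"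
    and applies: "reduction_applies X a"
    and maxweight: "\<forall>Y<4. facet_weight Y a \<le> facet_weight X a"
    and resI: "min_graded_free_res I N r dg g M"
    and lift_hom: "\<forall>j<r 0. homog (h j) (int e - dg 0 j)"
    and lift: "(\<Sum>j<r 0. g j * h j) = F"
  shows "min_graded_free_res J (cone_len N) (cone_rank r) (cone_deg r dg e)
           (cone_aug L F r g) (cone_mat L r h M)
         \<longleftrightarrow> \<not> special_form J"
proof -
  have a: "a = [a!0, a!1, a!2, a!3, a!4, a!5]"
    by (rule nth_equalityI) (auto simp: len less_Suc_eq numeral_eq_Suc)
  have Leq: "L = sg (sg X 1) 1" unfolding L_def by (rule red_L_eq)
  have Feq: "F = sg (mF X a) 1" unfolding F_def by (rule red_F_eq)
  have eeq: "e = mdeg (mF X a)" unfolding e_def red_F_eq tdeg_mon ..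
  have R: "graded_free_res I N r dg g M" and Mmax: "\<forall>i\<ge>1. \<forall>k<r (i - 1). \<forall>j<r i. in_max (M i k j)"
    using resI unfolding min_graded_free_res_def by auto
  note RR = R[unfolded graded_free_res_def]
  have im: "{\<Sum>j<r 0. g j * v j | v. True} = tet_ideal (red_tuple X a)" using RR unfolding I_def by blast
  have R0: "\<And>v. (\<Sum>j<r 0. g j * v j) = 0 \<longleftrightarrow> (\<exists>w. \<forall>k<r 0. v k = (\<Sum>j<r 1. M 1 k j * w j))"
    using RR by blast
  have M1: "\<forall>k<r 0. \<forall>j<r 1. in_max (M 1 k j)" using Mmax by auto
  have Jeq: "J = {L * x - F * y | x y. x \<in> I}"
    unfolding J_def I_def Leq Feq by (rule Jeq_lemma[OF a facet applies])
  have dv: "\<exists>C. B = L * C \<and> A = F * C" if "L * A = F * B" for A B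
  proof -
    have "sg (sg X 1) 1 * A = sg (mF X a) 1 * B" using that unfolding Leq Feq .
    from divis[OF this c5[OF facet]] show ?thesis unfolding Leq Feq .
  qed
  have hL: "homog L 1" unfolding Leq using homog_mon[of "sg X 1"] unfolding mdeg_eX by simp
  have hF: "homog F (int e)" unfolding Feq eeq by (rule homog_mon)
  have Lnz: "L \<noteq> 0" unfolding Leq by (rule mon_nz)
  have cres: "graded_free_res J (cone_len N) (cone_rank r) (cone_deg r dg e) (cone_aug L F r g) (cone_mat L r h M)"
    by (rule cone_res[OF R hL hF lift_hom lift Jeq dv Lnz])
  have ent: "(\<forall>i\<ge>1. \<forall>k<cone_rank r (i - 1). \<forall>j<cone_rank r i. in_max (cone_mat L r h M i k j))
     \<longleftrightarrow> (\<forall>k<r 0. in_max (h k))"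
    by (rule cone_entries[OF Mmax]) (unfold Leq, rule in_max_var)
  have core': "(\<exists>i<4. 0 < lk (mF X a) i \<and> pc6 id (red_tuple X a) (mF X a - sg i 1)) \<longleftrightarrow> \<not> pattern a"
    by (rule core[OF a facet applies nontrivial maxweight])
  have lift': "(\<Sum>j<r 0. g j * h j) = sg (mF X a) 1" using lift Feq by simp
  have hm: "(\<forall>k<r 0. in_max (h k)) \<longleftrightarrow> \<not> pattern a"
  proof
    assume h: "\<forall>k<r 0. in_max (h k)"
    show "\<not> pattern a"
    proof
      assume "pattern a"
      then have "\<not> (\<exists>i<4. 0 < lk (mF X a) i \<and> pc6 id (red_tuple X a) (mF X a - sg i 1))"
        using core' by blast
      then show False using not_hmax[where r=r and g=g and X=X and a=a and h=h, OF im lift' h] by blast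
    qed
  next
    assume "\<not> pattern a"
    then obtain i where "i < 4" "0 < lk (mF X a) i" "pc6 id (red_tuple X a) (mF X a - sg i 1)"
      using core' by blast
    then show "\<forall>k<r 0. in_max (h k)" using hmax_of_cond[where r=r and g=g and X=X and a=a and M=M and h=h, OF im R0 M1 lift'] by blast
  qed
  have sp: "special_form J \<longleftrightarrow> pattern a" unfolding J_def by (rule special_iff[OF len nontrivial])
  show ?thesis unfolding min_graded_free_res_def using cres ent hm sp by blast
qed

end
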